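(* Let $M_\varphi$ be a hyperbolic once-punctured torus bundle with fibre $S$. If $\overline\rho\colon\pi_1(S)\to\mathrm{PSL}(2,\mathbb{C})$ is irreducible and its centraliser satisfies $|C(\mathrm{im}(\overline\rho))|=4$, then $|\overline r^{-1}(\chi_{\overline\rho})|=2^{b_1(\varphi)-1}$. Moreover, exactly one of the characters in $\overline r^{-1}(\chi_{\overline\rho})$ lifts to $X(M_\varphi)$. For each representation of $\pi_1(M_\varphi)$ with character in $\overline r^{-1}(\chi_{\overline\rho})$, the image of the longitude is trivial; the image of the meridian has order two or four if $b_1(\varphi)=2$, and has order two or is trivial if $b_1(\varphi)=3$.
   Context: $\pi_1(M_\varphi)=\langle t,a,b\mid t^{-1}at=\varphi(a),t^{-1}bt=\varphi(b)\rangle$ with $a,b$ free generators of $\pi_1(S)$, meridian $t$ and longitude $[a,b]$-type commutator $a^{-1}b^{-1}ab$. $b_1(\varphi)=\dim_{\mathbb{Z}_2}H_1(M_\varphi;\mathbb{Z}_2)$. $\overline X(N)$ is the $\mathrm{PSL}(2,\mathbb{C})$-character variety (characters $\gamma\mapsto(\operatorname{tr}\overline\rho(\gamma))^2$), $X(N)$ the $\mathrm{SL}(2,\mathbb{C})$-character variety; a character in $\overline X(M_\varphi)$ lifts to $X(M_\varphi)$ if it is the image of a point of $X(M_\varphi)$ under the map induced by $\mathrm{SL}(2,\mathbb{C})\to\mathrm{PSL}(2,\mathbb{C})$. $\overline r\colon\overline X(M_\varphi)\to\overline X(S)$ is restriction. $C(\cdot)$ denotes centraliser in $\mathrm{PSL}(2,\mathbb{C})$.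 (The centraliser has order four exactly when $\overline\rho(\pi_1(S))$ is a Klein four group, i.e. $\chi_{\overline\rho}=(0,0,0,0)$.) *)

theory Defs
  imports "HOL-Analysis.Analysis"
begin

section \<open>Words in free groups\<close>

text \<open>A letter is a pair (e, g); e = True means the inverse g^{-1}.\<close>
type_synonym 'g word = "(bool \<times> 'g) list"

definition inv_word :: "'g word \<Rightarrow> 'g word" where
  "inv_word w = rev (map (\<lambda>(e, g). (\<not> e, g)) w)"

definition free_red1 :: "'g word \<Rightarrow> 'g word \<Rightarrow> bool" where
  "free_red1 u v \<longleftrightarrow> (\<exists>xs ys e g. u = xs @ [(e, g), (\<not> e, g)] @ ys \<and> v = xs @ ys)"

text \<open>Equality of words as elements of the free group.\<close>
definition free_eq :: "'g word \<Rightarrow> 'g word \<Rightarrow> bool" where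
  "free_eq = (\<lambda>x y. free_red1 x y \<or> free_red1 y x)\<^sup>*\<^sup>*"

text \<open>Substitution endomorphism of a free group determined by images of generators.\<close>
definition subst_word :: "('g \<Rightarrow> 'h word) \<Rightarrow> 'g word \<Rightarrow> 'h word" where
  "subst_word f w = concat (map (\<lambda>(e, g). if e then inv_word (f g) else f g) w)"

section \<open>The fibre group and the bundle group\<close>

datatype sgen = SA | SB   \<comment> \<open>free generators a, b of pi_1(S)\<close>
datatype mgen = MT | MA | MB  \<comment> \<open>generators t, a, b of pi_1(M_phi)\<close>

definition sgen_to_mgen :: "sgen \<Rightarrow> mgen" where
  "sgen_to_mgen g = (case g of SA \<Rightarrow> MA | SB \<Rightarrow> MB)"

definition embed_word :: "sgen word \<Rightarrow> mgen word" where
  "embed_word w = map (\<lambda>(e, g). (e, sgen_to_mgen g)) w"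

text \<open>phi is an automorphism of the free group F(a,b).\<close>
definition is_free_aut :: "(sgen \<Rightarrow> sgen word) \<Rightarrow> bool" where
  "is_free_aut \<phi> \<longleftrightarrow> (\<exists>\<psi>. \<forall>g. free_eq (subst_word \<psi> (\<phi> g)) [(False, g)]
                                \<and> free_eq (subst_word \<phi> (\<psi> g)) [(False, g)])"

definition exp_sum :: "sgen \<Rightarrow> sgen word \<Rightarrow> int" where
  "exp_sum g w = (\<Sum>l\<leftarrow>w. if snd l = g then (if fst l then -1 else 1) else 0)"

text \<open>Action of phi on H_1(S;Z) = Z^2: matrix entries.\<close>
definition ab_tr :: "(sgen \<Rightarrow> sgen word) \<Rightarrow> int" where
  "ab_tr \<phi> = exp_sum SA (\<phi> SA) + exp_sum SB (\<phi> SB)"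

definition ab_det :: "(sgen \<Rightarrow> sgen word) \<Rightarrow> int" where
  "ab_det \<phi> = exp_sum SA (\<phi> SA) * exp_sum SB (\<phi> SB) - exp_sum SA (\<phi> SB) * exp_sum SB (\<phi> SA)"

text \<open>M_phi is a hyperbolic (orientable) once-punctured torus bundle:
  phi is an automorphism of pi_1(S) = F(a,b) (every such is induced by a homeomorphism
  of S), orientation preserving, and Anosov (|trace| > 2).\<close>
definition hyperbolic_optb :: "(sgen \<Rightarrow> sgen word) \<Rightarrow> bool" where
  "hyperbolic_optb \<phi> \<longleftrightarrow> is_free_aut \<phi> \<and> ab_det \<phi> = 1 \<and> \<bar>ab_tr \<phi>\<bar> > 2"

text \<open>The relator words t^{-1} g t and the image phi(g) inside pi_1(M_phi).\<close>
definition conj_t :: "sgen \<Rightarrow> mgen word" where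
  "conj_t g = [(True, MT), (False, sgen_to_mgen g), (False, MT)]"

definition longitude :: "mgen word" where
  "longitude = [(True, MA), (True, MB), (False, MA), (False, MB)]"

section \<open>Matrices, SL(2,C), PSL(2,C)\<close>

type_synonym cmat = "complex^2^2"

definition mat_eval :: "('g \<Rightarrow> cmat) \<Rightarrow> 'g word \<Rightarrow> cmat" where
  "mat_eval \<rho> w = foldr (\<lambda>(e, g) M. (if e then matrix_inv (\<rho> g) else \<rho> g) ** M) w (mat 1)"

text \<open>Equality in PSL(2,C) of two SL(2,C) representatives.\<close>
definition psl_eq :: "cmat \<Rightarrow> cmat \<Rightarrow> bool" where
  "psl_eq M N \<longleftrightarrow> M = N \<or> M = - N"

text \<open>Order of the image of M in PSL(2,C) (0 if infinite order).\<close>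
definition psl_order :: "cmat \<Rightarrow> nat" where
  "psl_order M = (if \<exists>n>0. psl_eq ((((**) M) ^^ n) (mat 1)) (mat 1)
                  then LEAST n. n > 0 \<and> psl_eq ((((**) M) ^^ n) (mat 1)) (mat 1) else 0)"

text \<open>Representations: a homomorphism to PSL(2,C) from a group with the given generators
  is described by choosing SL(2,C) lifts of the images of the generators; the relations then
  hold up to sign.  Characters (trace squared) do not depend on the choice of lifts.\<close>
definition psl_rep_M :: "(sgen \<Rightarrow> sgen word) \<Rightarrow> (mgen \<Rightarrow> cmat) \<Rightarrow> bool" where
  "psl_rep_M \<phi> \<rho> \<longleftrightarrow> (\<forall>g. det (\<rho> g) = 1) \<and>
     (\<forall>g. psl_eq (mat_eval \<rho> (conj_t g)) (mat_eval \<rho> (embed_word (\<phi> g))))"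

definition sl_rep_M :: "(sgen \<Rightarrow> sgen word) \<Rightarrow> (mgen \<Rightarrow> cmat) \<Rightarrow> bool" where
  "sl_rep_M \<phi> \<rho> \<longleftrightarrow> (\<forall>g. det (\<rho> g) = 1) \<and>
     (\<forall>g. mat_eval \<rho> (conj_t g) = mat_eval \<rho> (embed_word (\<phi> g)))"

definition psl_rep_S :: "(sgen \<Rightarrow> cmat) \<Rightarrow> bool" where
  "psl_rep_S \<sigma> \<longleftrightarrow> (\<forall>g. det (\<sigma> g) = 1)"

text \<open>PSL character: gamma |-> (tr rho(gamma))^2; SL character: gamma |-> tr rho(gamma).\<close>
definition pchar :: "('g \<Rightarrow> cmat) \<Rightarrow> 'g word \<Rightarrow> complex" where
  "pchar \<rho> = (\<lambda>w. (trace (mat_eval \<rho> w))\<^sup>2)"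

definition schar :: "('g \<Rightarrow> cmat) \<Rightarrow> 'g word \<Rightarrow> complex" where
  "schar \<rho> = (\<lambda>w. trace (mat_eval \<rho> w))"

text \<open>PSL(2,C)-character variety of M_phi (as the set of characters).\<close>
definition Xbar_M :: "(sgen \<Rightarrow> sgen word) \<Rightarrow> (mgen word \<Rightarrow> complex) set" where
  "Xbar_M \<phi> = {pchar \<rho> | \<rho>. psl_rep_M \<phi> \<rho>}"

definition X_M :: "(sgen \<Rightarrow> sgen word) \<Rightarrow> (mgen word \<Rightarrow> complex) set" where
  "X_M \<phi> = {schar \<rho> | \<rho>. sl_rep_M \<phi> \<rho>}"

text \<open>The map X(M) -> Xbar(M) induced by SL(2,C) -> PSL(2,C) squares the traces.\<close>
definition lifts_to_X :: "(sgen \<Rightarrow> sgen word) \<Rightarrow> (mgen word \<Rightarrow> complex) \<Rightarrow> bool" where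
  "lifts_to_X \<phi> chi \<longleftrightarrow> (\<exists>xi\<in>X_M \<phi>. chi = (\<lambda>w. (xi w)\<^sup>2))"

text \<open>Restriction map rbar : Xbar(M_phi) -> Xbar(S).\<close>
definition rbar :: "(mgen word \<Rightarrow> complex) \<Rightarrow> sgen word \<Rightarrow> complex" where
  "rbar chi = (\<lambda>w. chi (embed_word w))"

definition rbar_fibre :: "(sgen \<Rightarrow> sgen word) \<Rightarrow> (sgen word \<Rightarrow> complex) \<Rightarrow> (mgen word \<Rightarrow> complex) set" where
  "rbar_fibre \<phi> chi0 = {chi \<in> Xbar_M \<phi>. rbar chi = chi0}"

text \<open>Image of a representation of pi_1(S) (SL(2,C) representatives).\<close>
definition rep_image :: "('g \<Rightarrow> cmat) \<Rightarrow> cmat set" where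
  "rep_image \<rho> = range (mat_eval \<rho>)"

text \<open>Irreducible: no common invariant line in C^2.\<close>
definition irreducible_rep :: "('g \<Rightarrow> cmat) \<Rightarrow> bool" where
  "irreducible_rep \<rho> \<longleftrightarrow> \<not> (\<exists>v::complex^2. v \<noteq> 0 \<and> (\<forall>M\<in>rep_image \<rho>. \<exists>c. M *v v = c *s v))"

text \<open>Centraliser in PSL(2,C) of a set of elements (given by SL representatives);
  an element of PSL(2,C) is represented as the set {X, -X}.\<close>
definition psl_centraliser :: "cmat set \<Rightarrow> cmat set set" where
  "psl_centraliser S = {{X, - X} | X. det X = 1 \<and>
       (\<forall>M\<in>S. psl_eq (X ** M ** matrix_inv X) M)}"

section \<open>Mod 2 first Betti number\<close>

text \<open>Homomorphisms pi_1(M_phi) -> Z/2 (Z/2 as bool with xor), described by images of generators.\<close>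
definition z2_eval :: "('g \<Rightarrow> bool) \<Rightarrow> 'g word \<Rightarrow> bool" where
  "z2_eval h w = foldr (\<lambda>(e, g) b. h g \<noteq> b) w False"

definition z2_homs_M :: "(sgen \<Rightarrow> sgen word) \<Rightarrow> (mgen \<Rightarrow> bool) set" where
  "z2_homs_M \<phi> = {h. \<forall>g. z2_eval h (conj_t g) = z2_eval h (embed_word (\<phi> g))}"

text \<open>b_1(phi) = dim_{Z/2} H_1(M_phi; Z/2) = dim_{Z/2} Hom(pi_1(M_phi), Z/2).\<close>
definition b1 :: "(sgen \<Rightarrow> sgen word) \<Rightarrow> nat" where
  "b1 \<phi> = (THE n. card (z2_homs_M \<phi>) = 2 ^ n)"

end

theory Submission
  imports Defs
begin


definition mk :: "complex \<Rightarrow> complex \<Rightarrow> complex \<Rightarrow> complex \<Rightarrow> cmat" where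
  "mk a b c d = (\<chi> i j. if i = 1 then (if j = 1 then a else b) else (if j = 1 then c else d))"

lemma mk_nth[simp]: "mk a b c d $ 1 $ 1 = a" "mk a b c d $ 1 $ 2 = b"
  "mk a b c d $ 2 $ 1 = c" "mk a b c d $ 2 $ 2 = d"
  by (simp_all add: mk_def)

lemma mk_eta: "M = mk (M$1$1) (M$1$2) (M$2$1) (M$2$2)"
  by (simp add: vec_eq_iff forall_2)

lemma mk_cases: obtains a b c d where "M = mk a b c d"
  using mk_eta by blast

lemma mk_eq[simp]: "mk a b c d = mk a' b' c' d' \<longleftrightarrow> a = a' \<and> b = b' \<and> c = c' \<and> d = d'"
  by (auto simp: vec_eq_iff forall_2)

lemma mk_mult[simp]: "mk a b c d ** mk e f g h = mk (a*e+b*g) (a*f+b*h) (c*e+d*g) (c*f+d*h)"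
  by (simp add: vec_eq_iff forall_2 matrix_matrix_mult_def sum_2)

lemma mk_det[simp]: "det (mk a b c d) = a*d - b*c"
  by (simp add: det_2)

lemma mk_trace[simp]: "trace (mk a b c d) = a + d"
  by (simp add: trace_def sum_2)

lemma mat1_mk: "mat 1 = mk 1 0 0 1"
  by (simp add: vec_eq_iff forall_2 mat_def)

lemma mk_neg[simp]: "- mk a b c d = mk (-a) (-b) (-c) (-d)"
  by (simp add: vec_eq_iff forall_2)

lemma inv_unique: fixes A B :: cmat
  assumes "A ** B = mat 1" "B ** A = mat 1" shows "matrix_inv A = B"
proof -
  have "\<exists>A'. A ** A' = mat 1 \<and> A' ** A = mat 1" using assms by blast
  then have h: "A ** matrix_inv A = mat 1 \<and> matrix_inv A ** A = mat 1"
    unfolding matrix_inv_def by (rule someI_ex)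
  have "matrix_inv A = matrix_inv A ** (A ** B)" using assms by (simp add: matrix_mul_rid)
  also have "\<dots> = B" using h by (simp add: matrix_mul_assoc matrix_mul_lid)
  finally show ?thesis .
qed

lemma mk_inv[simp]: "a*d - b*c = 1 \<Longrightarrow> matrix_inv (mk a b c d) = mk d (-b) (-c) a"
  by (rule inv_unique) (simp_all add: mat1_mk algebra_simps)

lemma det1_inv: fixes M :: cmat assumes "det M = 1"
  shows "M ** matrix_inv M = mat 1" "matrix_inv M ** M = mat 1"
  using assms by (cases M rule: mk_cases; simp add: mat1_mk algebra_simps)+

lemma det_mult2: "det ((A::cmat) ** B) = det A * det B" by (rule det_mul)

lemma mat_eval_Nil[simp]: "mat_eval \<rho> [] = mat 1"
  by (simp add: mat_eval_def)

lemma mat_eval_Cons[simp]: "mat_eval \<rho> ((e,g)#w) = (if e then matrix_inv (\<rho> g) else \<rho> g) ** mat_eval \<rho> w"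
  by (simp add: mat_eval_def)

lemma mat_eval_append: "mat_eval \<rho> (u @ v) = mat_eval \<rho> u ** mat_eval \<rho> v"
  by (induction u) (auto simp: matrix_mul_assoc matrix_mul_lid)

lemma mat_eval_embed: "mat_eval \<rho> (embed_word w) = mat_eval (\<rho> \<circ> sgen_to_mgen) w"
  by (induction w) (auto simp: embed_word_def)

lemma mat_eval_det: assumes "\<forall>g. det (\<rho> g) = 1" shows "det (mat_eval \<rho> w) = 1"
proof (induction w)
  case Nil then show ?case by (simp add: mat1_mk)
next
  case (Cons l w)
  obtain e g where l: "l = (e,g)" by (cases l)
  have "det (matrix_inv (\<rho> g)) = 1"
  proof -
    have "det (\<rho> g ** matrix_inv (\<rho> g)) = 1" using det1_inv assms by (simp add: mat1_mk)
    then show ?thesis using assms by (simp add: det_mul)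
  qed
  then show ?case using Cons assms l by (simp add: det_mul)
qed

lemma conj_inv: fixes M Q Qi :: cmat
  assumes "Q ** Qi = mat 1" "Qi ** Q = mat 1" "det M = 1"
  shows "matrix_inv (Qi ** M ** Q) = Qi ** matrix_inv M ** Q"
proof (rule inv_unique)
  have a: "M ** matrix_inv M = mat 1" "matrix_inv M ** M = mat 1" using det1_inv assms by auto
  show "Qi ** M ** Q ** (Qi ** matrix_inv M ** Q) = mat 1"
    by (simp add: matrix_mul_assoc[symmetric]) (simp add: matrix_mul_assoc assms a matrix_mul_lid matrix_mul_rid)
  show "Qi ** matrix_inv M ** Q ** (Qi ** M ** Q) = mat 1"
    by (simp add: matrix_mul_assoc[symmetric]) (simp add: matrix_mul_assoc assms a matrix_mul_lid matrix_mul_rid)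
qed

lemma mat_eval_conj: fixes Q Qi :: cmat
  assumes "Q ** Qi = mat 1" "Qi ** Q = mat 1" "\<forall>g. det (\<rho> g) = 1"
  shows "mat_eval (\<lambda>g. Qi ** \<rho> g ** Q) w = Qi ** mat_eval \<rho> w ** Q"
proof (induction w)
  case Nil then show ?case using assms by (simp add: matrix_mul_rid)
next
  case (Cons l w)
  obtain e g where l: "l = (e,g)" by (cases l)
  have x: "(if e then matrix_inv (Qi ** \<rho> g ** Q) else Qi ** \<rho> g ** Q) = Qi ** (if e then matrix_inv (\<rho> g) else \<rho> g) ** Q"
    using conj_inv assms by auto
  show ?case using Cons l x
    by (simp add: matrix_mul_assoc) (simp add: matrix_mul_assoc[symmetric] assms matrix_mul_lid)
qed

lemma trace_conj: fixes Q Qi M :: cmat assumes "Qi ** Q = mat 1" "Q ** Qi = mat 1"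
  shows "trace (Qi ** M ** Q) = trace M"
proof -
  have "trace (Qi ** M ** Q) = trace (Q ** (Qi ** M))" by (rule trace_mul_sym)
  also have "Q ** (Qi ** M) = M" by (simp add: matrix_mul_assoc assms matrix_mul_lid)
  finally show ?thesis .
qed

lemma inv_neg: fixes M :: cmat assumes "det M = 1" shows "matrix_inv (- M) = - matrix_inv M"
  using assms by (cases M rule: mk_cases) simp

lemma neg_mult_l[simp]: "(- (A::cmat)) ** (B::cmat) = - (A ** B)"
  by (cases A rule: mk_cases; cases B rule: mk_cases) simp
lemma neg_mult_r[simp]: "(A::cmat) ** (- B::cmat) = - (A ** B)"
  by (cases A rule: mk_cases; cases B rule: mk_cases) simp

lemma psl_eq_mult: "psl_eq A A' \<Longrightarrow> psl_eq B B' \<Longrightarrow> psl_eq (A ** B) (A' ** B')"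
  by (auto simp: psl_eq_def)

lemma psl_eq_sym: "psl_eq A B \<Longrightarrow> psl_eq B A"
  by (auto simp: psl_eq_def)

lemma psl_eq_trans: "psl_eq A B \<Longrightarrow> psl_eq B C \<Longrightarrow> psl_eq A (C::cmat)"
  by (auto simp: psl_eq_def)

lemma mat_eval_sign: assumes "\<forall>g. \<rho>' g = \<rho> g \<or> \<rho>' g = - \<rho> g" "\<forall>g. det (\<rho> g) = 1"
  shows "psl_eq (mat_eval \<rho>' w) (mat_eval \<rho> w)"
proof (induction w)
  case Nil then show ?case by (simp add: psl_eq_def)
next
  case (Cons l w)
  obtain e g where l: "l = (e,g)" by (cases l)
  have "psl_eq (if e then matrix_inv (\<rho>' g) else \<rho>' g) (if e then matrix_inv (\<rho> g) else \<rho> g)"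
    using assms inv_neg[of "\<rho> g"] by (cases "\<rho>' g = \<rho> g") (auto simp: psl_eq_def)
  then show ?case using Cons l psl_eq_mult by simp
qed



definition "Is = mk \<i> 0 0 (-\<i>)"
definition "Js = mk 0 1 (-1) 0"
definition "Ks = mk 0 \<i> \<i> 0"

definition qs :: "bool \<Rightarrow> bool \<Rightarrow> cmat" where
  "qs \<alpha> \<beta> = (if \<alpha> then (if \<beta> then Ks else Is) else (if \<beta> then Js else mat 1))"

definition sig0 :: "sgen \<Rightarrow> cmat" where
  "sig0 g = (case g of SA \<Rightarrow> Is | SB \<Rightarrow> Js)"

lemma Is_sq: "Is ** Is = - mat 1" by (simp add: Is_def mat1_mk)
lemma Js_sq: "Js ** Js = - mat 1" by (simp add: Js_def mat1_mk)
lemma Ks_sq: "Ks ** Ks = - mat 1" by (simp add: Ks_def mat1_mk)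
lemma IJ: "Is ** Js = Ks" by (simp add: Is_def Js_def Ks_def)
lemma JI: "Js ** Is = - Ks" by (simp add: Is_def Js_def Ks_def)
lemma IK: "Is ** Ks = - Js" by (simp add: Is_def Js_def Ks_def)
lemma KI: "Ks ** Is = Js" by (simp add: Is_def Js_def Ks_def)
lemma JK: "Js ** Ks = Is" by (simp add: Is_def Js_def Ks_def)
lemma KJ: "Ks ** Js = - Is" by (simp add: Is_def Js_def Ks_def)
lemma inv_Is: "matrix_inv Is = - Is" by (simp add: Is_def)
lemma inv_Js: "matrix_inv Js = - Js" by (simp add: Js_def)
lemma inv_Ks: "matrix_inv Ks = - Ks" by (simp add: Ks_def)
lemma det_IJK: "det Is = 1" "det Js = 1" "det Ks = 1" by (simp_all add: Is_def Js_def Ks_def)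
lemmas q8_simps = Is_sq Js_sq Ks_sq IJ JI IK KI JK KJ inv_Is inv_Js inv_Ks matrix_mul_lid matrix_mul_rid

lemma qI: "psl_eq (Is ** qs a b) (qs (\<not>a) b)"
  by (cases a; cases b) (simp_all add: qs_def psl_eq_def q8_simps)

lemma qJ: "psl_eq (Js ** qs a b) (qs a (\<not>b))"
  by (cases a; cases b) (simp_all add: qs_def psl_eq_def q8_simps)
lemma qIi: "psl_eq (matrix_inv Is ** qs a b) (qs (\<not>a) b)"
  by (cases a; cases b) (simp_all add: qs_def psl_eq_def q8_simps)
lemma qJi: "psl_eq (matrix_inv Js ** qs a b) (qs a (\<not>b))"
  by (cases a; cases b) (simp_all add: qs_def psl_eq_def q8_simps)

lemma exp_sum_Nil[simp]: "exp_sum g [] = 0" by (simp add: exp_sum_def)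
lemma exp_sum_Cons[simp]: "exp_sum g ((e,h)#w) = (if h = g then (if e then -1 else 1) else 0) + exp_sum g w"
  by (simp add: exp_sum_def)

lemma q8_eval: "psl_eq (mat_eval sig0 w) (qs (odd (exp_sum SA w)) (odd (exp_sum SB w)))"
proof (induction w)
  case Nil then show ?case by (simp add: psl_eq_def qs_def)
next
  case (Cons l w)
  obtain e g where l: "l = (e,g)" by (cases l)
  define \<alpha> where "\<alpha> = odd (exp_sum SA w)"
  define \<beta> where "\<beta> = odd (exp_sum SB w)"
  have IH: "psl_eq (mat_eval sig0 w) (qs \<alpha> \<beta>)" using Cons \<alpha>_def \<beta>_def by simp
  have key: "psl_eq ((if e then matrix_inv (sig0 g) else sig0 g) ** qs \<alpha> \<beta>)
     (qs (if g = SA then \<not>\<alpha> else \<alpha>) (if g = SB then \<not>\<beta> else \<beta>))"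
    using qI[of \<alpha> \<beta>] qJ[of \<alpha> \<beta>] qIi[of \<alpha> \<beta>] qJi[of \<alpha> \<beta>] by (cases e; cases g) (simp_all add: sig0_def)
  have "psl_eq (mat_eval sig0 (l#w)) ((if e then matrix_inv (sig0 g) else sig0 g) ** qs \<alpha> \<beta>)"
  proof -
    have "mat_eval sig0 (l#w) = (if e then matrix_inv (sig0 g) else sig0 g) ** mat_eval sig0 w"
      using l by simp
    moreover have "psl_eq ((if e then matrix_inv (sig0 g) else sig0 g) ** mat_eval sig0 w)
       ((if e then matrix_inv (sig0 g) else sig0 g) ** qs \<alpha> \<beta>)"
      by (rule psl_eq_mult[OF _ IH]) (simp add: psl_eq_def)
    ultimately show ?thesis by simp
  qed
  moreover have "(qs (if g = SA then \<not>\<alpha> else \<alpha>) (if g = SB then \<not>\<beta> else \<beta>)) =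
     qs (odd (exp_sum SA (l#w))) (odd (exp_sum SB (l#w)))"
    using l by (cases g) (auto simp: \<alpha>_def \<beta>_def)
  ultimately show ?case using psl_eq_trans[OF _ key] by simp
qed

lemma z2_eval_Nil[simp]: "z2_eval h [] = False" by (simp add: z2_eval_def)
lemma z2_eval_Cons[simp]: "z2_eval h ((e,g)#w) = (h g \<noteq> z2_eval h w)" by (simp add: z2_eval_def)

lemma z2_eval_embed: "z2_eval h (embed_word w) = z2_eval (h \<circ> sgen_to_mgen) w"
  by (induction w) (auto simp: embed_word_def)

lemma z2_eval_S: "z2_eval h w = ((h SA \<and> odd (exp_sum SA w)) \<noteq> (h SB \<and> odd (exp_sum SB w)))"
proof (induction w)
  case Nil then show ?case by simp
next
  case (Cons l w)
  then show ?case by (cases l; cases "snd l") auto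
qed



lemma eigvec:
  fixes a b c :: complex assumes "a*a + b*c = -1"
  obtains v1 v2 where "(v1,v2) \<noteq> (0,0)" "a* v1 + b* v2 = \<i>* v1" "c* v1 - a* v2 = \<i>* v2"
proof (cases "b = 0 \<and> a = \<i>")
  case True
  then show ?thesis using assms
    by (intro that[of "2*\<i>" c]) (auto simp: algebra_simps)
next
  case False
  show ?thesis
  proof (rule that[of b "\<i> - a"])
    show "(b, \<i> - a) \<noteq> (0, 0)" using False by auto
    show "a * b + b * (\<i> - a) = \<i> * b" by (simp add: algebra_simps)
    show "c * b - a * (\<i> - a) = \<i> * (\<i> - a)" using assms
      by (simp add: algebra_simps power2_eq_square)
  qed
qed

lemma dep_zero:
  fixes a b c v1 v2 w1 w2 :: complex
  assumes "(v1,v2) \<noteq> (0,0)" "a* v1 + b* v2 = \<i>* v1" "c* v1 - a* v2 = \<i>* v2"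
    "a*w1 + b*w2 = -\<i>*w1" "c*w1 - a*w2 = -\<i>*w2" "w1* v2 - v1*w2 = 0"
  shows "w1 = 0 \<and> w2 = 0"
proof (cases "v1 = 0")
  case False
  define l where "l = w1 / v1"
  have w1: "w1 = l * v1" and w2: "w2 = l * v2" using False assms(6) by (auto simp: l_def field_simps)
  have "l * (a* v1 + b* v2) = l * (\<i>* v1)" using assms(2) by simp
  then have "a*w1 + b*w2 = \<i>*w1" by (simp add: w1 w2 algebra_simps)
  with assms(4) have "w1 = 0" by simp
  then show ?thesis using w2 False by (simp add: l_def)
next
  case True
  then have v2: "v2 \<noteq> 0" using assms(1) by auto
  define l where "l = w2 / v2"
  have w1: "w1 = l * v1" and w2: "w2 = l * v2" using True v2 assms(6) by (auto simp: l_def field_simps)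
  have "l * (c* v1 - a* v2) = l * (\<i>* v2)" using assms(3) by simp
  then have "c*w1 - a*w2 = \<i>*w2" by (simp add: w1 w2 algebra_simps)
  with assms(5) have "w2 = 0" by simp
  then show ?thesis using w1 True by (simp add: l_def)
qed

lemma NF:
  fixes A B :: cmat
  assumes "det A = 1" "det B = 1" "trace A = 0" "trace B = 0" "trace (A ** B) = 0"
  shows "\<exists>Q Qi. Q ** Qi = mat 1 \<and> Qi ** Q = mat 1 \<and> Qi ** A ** Q = Is \<and> Qi ** B ** Q = Js"
proof -
  obtain a b c d where A: "A = mk a b c d" by (rule mk_cases)
  obtain e f g h where B: "B = mk e f g h" by (rule mk_cases)
  have d: "d = -a" using assms(3) A by (simp add: add_eq_0_iff)
  have h: "h = -e" using assms(4) B by (simp add: add_eq_0_iff)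
  have "-(a*a) - b*c = 1" using assms(1) A d by simp
  then have detA: "a*a + b*c = -1" by algebra
  have "-(e*e) - f*g = 1" using assms(2) B h by simp
  then have detB: "e*e + f*g = -1" by algebra
  have trAB: "2*a*e + b*g + c*f = 0" using assms(5) A B d h by (simp add: algebra_simps)
  obtain v1 v2 where v: "(v1,v2) \<noteq> (0,0)" "a* v1 + b* v2 = \<i>* v1" "c* v1 - a* v2 = \<i>* v2"
    using eigvec[OF detA] by blast
  define w1 where "w1 = e* v1 + f* v2"
  define w2 where "w2 = g* v1 - e* v2"
  have Aw1: "a*w1 + b*w2 = -\<i>*w1" using trAB v(2,3) unfolding w1_def w2_def by algebra
  have Aw2: "c*w1 - a*w2 = -\<i>*w2" using trAB v(2,3) unfolding w1_def w2_def by algebra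
  define D where "D = w1* v2 - v1*w2"
  have D: "D \<noteq> 0"
  proof
    assume "D = 0"
    then have "w1 = 0 \<and> w2 = 0" using dep_zero[OF v Aw1 Aw2] by (simp add: D_def)
    then have "e*w1 + f*w2 = 0" "g*w1 - e*w2 = 0" by auto
    then have "-v1 = 0" "-v2 = 0" using detB by (simp_all add: w1_def w2_def algebra_simps, algebra+)
    then show False using v(1) by simp
  qed
  define Q where "Q = mk v1 (-w1) v2 (-w2)"
  define Qi where "Qi = mk (-w2/D) (w1/D) (-v2/D) (v1/D)"
  have QQi: "Q ** Qi = mat 1" "Qi ** Q = mat 1" using D
    by (simp_all add: Q_def Qi_def mat1_mk divide_simps) (simp_all add: D_def algebra_simps)
  have AQ: "A ** Q = Q ** Is" unfolding A d Q_def Is_def using v(2,3) Aw1 Aw2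
    by (simp only: mk_mult mk_eq) algebra
  have BQ: "B ** Q = Q ** Js" unfolding B h Q_def Js_def w1_def w2_def using detB
    by (simp only: mk_mult mk_eq) algebra
  have "Qi ** A ** Q = Is"
    by (metis AQ QQi(2) matrix_mul_assoc matrix_mul_lid)
  moreover have "Qi ** B ** Q = Js"
    by (metis BQ QQi(2) matrix_mul_assoc matrix_mul_lid)
  ultimately show ?thesis using QQi by blast
qed



definition vec2 :: "complex \<Rightarrow> complex \<Rightarrow> complex^2" where
  "vec2 x y = (\<chi> i. if i = 1 then x else y)"

lemma vec2_nth[simp]: "vec2 x y $ 1 = x" "vec2 x y $ 2 = y" by (simp_all add: vec2_def)

lemma vec2_eq[simp]: "vec2 x y = vec2 x' y' \<longleftrightarrow> x = x' \<and> y = y'"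
  by (auto simp: vec_eq_iff forall_2)

lemma vec2_zero: "vec2 x y = 0 \<longleftrightarrow> x = 0 \<and> y = 0"
  by (auto simp: vec_eq_iff forall_2)

lemma mk_mulv[simp]: "mk a b c d *v vec2 x y = vec2 (a * x + b * y) (c * x + d * y)"
  by (simp add: vec_eq_iff forall_2 matrix_vector_mult_def sum_2)

lemma vec2_scale[simp]: "k *s vec2 x y = vec2 (k * x) (k * y)"
  by (simp add: vec_eq_iff forall_2)

lemma commutant:
  fixes Z M :: cmat
  assumes "Z ** M = M ** Z" "\<not> (\<exists>z. Z = mk z 0 0 z)"
  shows "\<exists>\<alpha> \<beta>. M = mk (\<alpha> + \<beta> * Z$1$1) (\<beta> * Z$1$2) (\<beta> * Z$2$1) (\<alpha> + \<beta> * Z$2$2)"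
proof -
  obtain p q r s where Z: "Z = mk p q r s" by (rule mk_cases)
  obtain m1 m2 m3 m4 where M: "M = mk m1 m2 m3 m4" by (rule mk_cases)
  have e: "p * m1 + q * m3 = m1 * p + m2 * r" "p * m2 + q * m4 = m1 * q + m2 * s"
          "r * m1 + s * m3 = m3 * p + m4 * r" "r * m2 + s * m4 = m3 * q + m4 * s"
    using assms(1) unfolding Z M by simp_all
  have ns: "q \<noteq> 0 \<or> r \<noteq> 0 \<or> p \<noteq> s" using assms(2) Z by auto
  show ?thesis
  proof (cases "q \<noteq> 0")
    case True
    define \<beta> where "\<beta> = m2 / q"
    define \<alpha> where "\<alpha> = m1 - \<beta> * p"
    have b: "m2 = \<beta> * q" using True by (simp add: \<beta>_def)
    have "m3 = \<beta> * r" using e(1) True b by (simp add: algebra_simps)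
    moreover have "m4 = \<alpha> + \<beta> * s"
    proof -
      have "(m4 + \<beta> * p) * q = (m1 + \<beta> * s) * q" using e(2) b by (simp add: algebra_simps)
      then have "m4 + \<beta> * p = m1 + \<beta> * s" using True by simp
      then show ?thesis by (simp add: \<alpha>_def algebra_simps)
    qed
    ultimately show ?thesis using Z M b by (intro exI[of _ \<alpha>] exI[of _ \<beta>]) (simp add: \<alpha>_def)
  next
    case q: False
    show ?thesis
    proof (cases "r \<noteq> 0")
      case True
      define \<beta> where "\<beta> = m3 / r"
      define \<alpha> where "\<alpha> = m1 - \<beta> * p"
      have b: "m3 = \<beta> * r" using True by (simp add: \<beta>_def)
      have "m2 = 0" using e(1) q b True by simp
      moreover have "m4 = \<alpha> + \<beta> * s"
      proof -
        have "(m4 + \<beta> * p) * r = (m1 + \<beta> * s) * r" using e(3) b by (simp add: algebra_simps)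
        then have "m4 + \<beta> * p = m1 + \<beta> * s" using True by simp
        then show ?thesis by (simp add: \<alpha>_def algebra_simps)
      qed
      ultimately show ?thesis using Z M b q by (intro exI[of _ \<alpha>] exI[of _ \<beta>]) (simp add: \<alpha>_def)
    next
      case r: False
      then have ps: "p \<noteq> s" using ns q by auto
      define \<beta> where "\<beta> = (m1 - m4) / (p - s)"
      define \<alpha> where "\<alpha> = m1 - \<beta> * p"
      have "m2 = 0" using e(2) q r ps by (simp add: algebra_simps)
      moreover have "m3 = 0" using e(3) q r ps by (simp add: algebra_simps)
      moreover have "m4 = \<alpha> + \<beta> * s"
      proof -
        have h: "\<beta> * (p - s) = m1 - m4" using ps by (simp add: \<beta>_def)
        show ?thesis using h unfolding \<alpha>_def by algebra
      qed
      ultimately show ?thesis using Z M q r by (intro exI[of _ \<alpha>] exI[of _ \<beta>]) (simp add: \<alpha>_def)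
    qed
  qed
qed

lemma mulv_scale: "(M::cmat) *v (c *s v) = c *s (M *v v)"
  by (simp add: vec_eq_iff forall_2 matrix_vector_mult_def sum_2 algebra_simps)

lemma vec2_cases: obtains x y where "(v::complex^2) = vec2 x y"
proof -
  have "v = vec2 (v$1) (v$2)" by (simp add: vec_eq_iff forall_2)
  then show ?thesis using that by blast
qed

lemma eig_exists:
  fixes Z :: cmat assumes "\<not> (\<exists>z. Z = mk z 0 0 z)"
  shows "\<exists>l v. v \<noteq> 0 \<and> Z *v v = l *s v"
proof -
  obtain p q r s where Z: "Z = mk p q r s" by (rule mk_cases)
  define C where "C = csqrt ((p + s)^2 - 4 * (p * s - q * r))"
  have C2: "C^2 = (p + s)^2 - 4 * (p * s - q * r)" by (simp add: C_def)
  define l where "l = ((p + s) + C) / 2"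
  have "2 * l = p + s + C" by (simp add: l_def)
  then have ch: "l * l - (p + s) * l + (p * s - q * r) = 0" using C2 by algebra
  show ?thesis
  proof (cases "p = l \<and> q = 0")
    case True
    have "vec2 (l - s) r \<noteq> 0" using True assms Z by (auto simp: vec2_zero)
    moreover have "Z *v vec2 (l - s) r = l *s vec2 (l - s) r" using True Z by (simp add: algebra_simps)
    ultimately show ?thesis by blast
  next
    case False
    have "vec2 q (l - p) \<noteq> 0" using False by (auto simp: vec2_zero)
    moreover have "Z *v vec2 q (l - p) = l *s vec2 q (l - p)" using Z ch
      by (simp add: algebra_simps)
    ultimately show ?thesis by blast
  qed
qed

lemma schur:
  fixes \<sigma> :: "'g \<Rightarrow> cmat" and Z :: cmat
  assumes irr: "irreducible_rep \<sigma>" and det: "\<forall>g. det (\<sigma> g) = 1"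
    and com: "\<forall>g. Z ** \<sigma> g = \<sigma> g ** Z"
  shows "\<exists>z. Z = mk z 0 0 z"
proof (rule ccontr)
  assume ns: "\<not> (\<exists>z. Z = mk z 0 0 z)"
  obtain l v where v: "v \<noteq> 0" "Z *v v = l *s v" using eig_exists[OF ns] by blast
  have gen: "\<exists>c. \<sigma> g *v v = c *s v" for g
  proof -
    obtain p q r s where Z: "Z = mk p q r s" by (rule mk_cases)
    obtain \<alpha> \<beta> where M: "\<sigma> g = mk (\<alpha> + \<beta> * p) (\<beta> * q) (\<beta> * r) (\<alpha> + \<beta> * s)"
      using commutant[OF com[rule_format, of g] ns] Z by auto
    obtain x y where xy: "v = vec2 x y" by (rule vec2_cases)
    have e: "p * x + q * y = l * x" "r * x + s * y = l * y" using v(2) Z xy by simp_all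
    have e1: "(\<alpha> + \<beta> * p) * x + \<beta> * q * y = (\<alpha> + \<beta> * l) * x" using e(1) by algebra
    have e2: "\<beta> * r * x + (\<alpha> + \<beta> * s) * y = (\<alpha> + \<beta> * l) * y" using e(2) by algebra
    have "\<sigma> g *v v = (\<alpha> + \<beta> * l) *s v" using M xy e1 e2 by (simp add: mult.assoc)
    then show ?thesis by blast
  qed
  have "\<exists>c. mat_eval \<sigma> w *v v = c *s v" for w
  proof (induction w)
    case Nil then show ?case by (intro exI[of _ 1]) simp
  next
    case (Cons lt w)
    obtain e g where lt: "lt = (e,g)" by (cases lt)
    obtain c where c: "mat_eval \<sigma> w *v v = c *s v" using Cons by blast
    have "\<exists>d. (if e then matrix_inv (\<sigma> g) else \<sigma> g) *v v = d *s v"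
    proof (cases e)
      case False then show ?thesis using gen by simp
    next
      case True
      obtain d where d: "\<sigma> g *v v = d *s v" using gen by blast
      have inv: "matrix_inv (\<sigma> g) ** \<sigma> g = mat 1" using det1_inv det by blast
      have "v = matrix_inv (\<sigma> g) *v (\<sigma> g *v v)" by (simp add: matrix_vector_mul_assoc inv)
      also have "\<dots> = d *s (matrix_inv (\<sigma> g) *v v)" by (simp add: d mulv_scale)
      finally have vd: "v = d *s (matrix_inv (\<sigma> g) *v v)" .
      then have "d \<noteq> 0" using v(1) by auto
      have "(1/d) *s v = ((1/d) * d) *s (matrix_inv (\<sigma> g) *v v)"
        by (subst vd) (simp only: vector_smult_assoc)
      then have "matrix_inv (\<sigma> g) *v v = (1/d) *s v" using \<open>d \<noteq> 0\<close> by simp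
      then show ?thesis using True by auto
    qed
    then obtain d where "(if e then matrix_inv (\<sigma> g) else \<sigma> g) *v v = d *s v" by blast
    then have "mat_eval \<sigma> (lt # w) *v v = (c * d) *s v" using lt c
      by (simp add: matrix_vector_mul_assoc[symmetric] mulv_scale vector_smult_assoc mult.commute)
    then show ?case by blast
  qed
  then show False using irr v(1) unfolding irreducible_rep_def rep_image_def by blast
qed



lemma trace_neg: "trace (- (M::cmat)) = - trace M"
  by (cases M rule: mk_cases) simp

lemma det_neg: "det (- (M::cmat)) = det M"
  by (cases M rule: mk_cases) simp

lemma comm_from:
  fixes X Y M N :: cmat
  assumes "det X = 1" "det Y = 1" "X ** M ** matrix_inv X = N" "Y ** M ** matrix_inv Y = N"
  shows "(matrix_inv Y ** X) ** M = M ** (matrix_inv Y ** X)"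
proof -
  have X: "X ** matrix_inv X = mat 1" "matrix_inv X ** X = mat 1" using det1_inv assms(1) by auto
  have Y: "Y ** matrix_inv Y = mat 1" "matrix_inv Y ** Y = mat 1" using det1_inv assms(2) by auto
  have XM: "X ** M = N ** X"
  proof -
    have "N ** X = X ** M ** (matrix_inv X ** X)" using assms(3) by (simp add: matrix_mul_assoc)
    then show ?thesis using X by (simp add: matrix_mul_rid)
  qed
  have YM: "matrix_inv Y ** N = M ** matrix_inv Y"
  proof -
    have "matrix_inv Y ** N = (matrix_inv Y ** Y) ** M ** matrix_inv Y"
      by (subst assms(4)[symmetric]) (simp add: matrix_mul_assoc)
    then show ?thesis using Y by (simp add: matrix_mul_lid)
  qed
  have "(matrix_inv Y ** X) ** M = matrix_inv Y ** (X ** M)" by (simp add: matrix_mul_assoc)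
  also have "\<dots> = (matrix_inv Y ** N) ** X" by (simp add: XM matrix_mul_assoc)
  also have "\<dots> = M ** (matrix_inv Y ** X)" by (simp add: YM matrix_mul_assoc)
  finally show ?thesis .
qed

lemma conj_neg_same: fixes X M :: cmat assumes "det X = 1"
  shows "(- X) ** M ** matrix_inv (- X) = X ** M ** matrix_inv X"
  using inv_neg[OF assms] by simp

definition sp :: "cmat \<Rightarrow> cmat \<Rightarrow> cmat \<Rightarrow> bool \<times> bool" where
  "sp A B X = (X ** A ** matrix_inv X \<noteq> A, X ** B ** matrix_inv X \<noteq> B)"

lemma eval_gen: "mat_eval \<sigma> [(False, g)] = \<sigma> g"
  by (simp add: matrix_mul_rid)

lemma centr_traces:
  fixes \<sigma> :: "sgen \<Rightarrow> cmat"
  assumes det: "psl_rep_S \<sigma>" and irr: "irreducible_rep \<sigma>"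
    and card: "card (psl_centraliser (rep_image \<sigma>)) = 4"
  shows "trace (\<sigma> SA) = 0 \<and> trace (\<sigma> SB) = 0 \<and> trace (\<sigma> SA ** \<sigma> SB) = 0"
proof -
  define A where "A = \<sigma> SA"
  define B where "B = \<sigma> SB"
  define C where "C = psl_centraliser (rep_image \<sigma>)"
  have dets: "\<forall>g. det (\<sigma> g) = 1" using det by (simp add: psl_rep_S_def)
  have AB_in: "A \<in> rep_image \<sigma>" "B \<in> rep_image \<sigma>"
    unfolding A_def B_def rep_image_def using eval_gen by (metis rangeI)+
  define f where "f S = sp A B (SOME X. X \<in> S)" for S :: "cmat set"
  have memC: "\<exists>X. S = {X, -X} \<and> det X = 1 \<and> psl_eq (X ** A ** matrix_inv X) A \<and> psl_eq (X ** B ** matrix_inv X) B"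
    if "S \<in> C" for S
    using that AB_in unfolding C_def psl_centraliser_def by blast
  have fS: "f S = sp A B X" if "S = {X, -X}" "det X = 1" for S X
  proof -
    have "(SOME X. X \<in> S) \<in> S" using that by (metis (mono_tags) insertI1 someI)
    then have "(SOME X. X \<in> S) = X \<or> (SOME X. X \<in> S) = -X" using that by auto
    then show ?thesis unfolding f_def sp_def using conj_neg_same[OF that(2)] by auto
  qed
  have inj: "inj_on f C"
  proof (rule inj_onI)
    fix S1 S2 assume S1: "S1 \<in> C" and S2: "S2 \<in> C" and eq: "f S1 = f S2"
    obtain X where X: "S1 = {X, -X}" "det X = 1" "psl_eq (X ** A ** matrix_inv X) A" "psl_eq (X ** B ** matrix_inv X) B"
      using memC[OF S1] by blast
    obtain Y where Y: "S2 = {Y, -Y}" "det Y = 1" "psl_eq (Y ** A ** matrix_inv Y) A" "psl_eq (Y ** B ** matrix_inv Y) B"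
      using memC[OF S2] by blast
    have spe: "sp A B X = sp A B Y" using eq fS X Y by metis
    have cA: "X ** A ** matrix_inv X = Y ** A ** matrix_inv Y"
      using spe X(3) Y(3) unfolding sp_def psl_eq_def by auto
    have cB: "X ** B ** matrix_inv X = Y ** B ** matrix_inv Y"
      using spe X(4) Y(4) unfolding sp_def psl_eq_def by auto
    define Z where "Z = matrix_inv Y ** X"
    have "\<forall>g. Z ** \<sigma> g = \<sigma> g ** Z"
    proof
      fix g show "Z ** \<sigma> g = \<sigma> g ** Z"
        using comm_from[OF X(2) Y(2) cA refl] comm_from[OF X(2) Y(2) cB refl]
        unfolding Z_def A_def B_def by (cases g) auto
    qed
    then obtain z where z: "Z = mk z 0 0 z" using schur[OF irr dets] by blast
    have "det Z = 1"
    proof -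
      have "det (matrix_inv Y ** Y) = 1" using det1_inv Y(2) by (simp add: mat1_mk)
      then have "det (matrix_inv Y) = 1" using Y(2) by (simp add: det_mul)
      then show ?thesis using X(2) by (simp add: Z_def det_mul)
    qed
    then have "z * z = 1" using z by simp
    then have zz: "z = 1 \<or> z = -1" by (metis mult_cancel_left1 square_eq_1_iff)
    have "X = Y ** Z"
    proof -
      have "Y ** Z = (Y ** matrix_inv Y) ** X" by (simp add: Z_def matrix_mul_assoc)
      then show ?thesis using det1_inv Y(2) by (simp add: matrix_mul_lid)
    qed
    then have "X = Y \<or> X = - Y" using zz z
      by (cases Y rule: mk_cases) auto
    then show "S1 = S2" using X(1) Y(1) by auto
  qed
  have finC: "finite C" using card C_def by (metis card.infinite zero_neq_numeral)
  have "card (f ` C) = 4" using card_image[OF inj] card C_def by simp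
  moreover have "card (UNIV :: (bool \<times> bool) set) = 4" by (simp add: card_UNIV_bool card_cartesian_product)
  ultimately have im: "f ` C = UNIV" by (intro card_subset_eq[of UNIV]) simp_all
  obtain S1 where S1: "S1 \<in> C" "f S1 = (True, False)" using im by (metis UNIV_I imageE)
  obtain S2 where S2: "S2 \<in> C" "f S2 = (False, True)" using im by (metis UNIV_I imageE)
  obtain X where X: "S1 = {X, -X}" "det X = 1" "psl_eq (X ** A ** matrix_inv X) A" "psl_eq (X ** B ** matrix_inv X) B"
    using memC[OF S1(1)] by blast
  obtain Y where Y: "S2 = {Y, -Y}" "det Y = 1" "psl_eq (Y ** A ** matrix_inv Y) A" "psl_eq (Y ** B ** matrix_inv Y) B"
    using memC[OF S2(1)] by blast
  have XA: "X ** A ** matrix_inv X = - A" and XB: "X ** B ** matrix_inv X = B"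
    using S1(2) fS[OF X(1,2)] X(3,4) unfolding sp_def psl_eq_def by auto
  have YB: "Y ** B ** matrix_inv Y = - B"
    using S2(2) fS[OF Y(1,2)] Y(4) unfolding sp_def psl_eq_def by auto
  have Xi: "X ** matrix_inv X = mat 1" "matrix_inv X ** X = mat 1" using det1_inv X(2) by auto
  have Yi: "Y ** matrix_inv Y = mat 1" "matrix_inv Y ** Y = mat 1" using det1_inv Y(2) by auto
  have "trace A = - trace A"
    using trace_conj[OF Xi, of A] XA trace_neg by simp
  then have tA: "trace A = 0" by simp
  have "trace B = - trace B"
    using trace_conj[OF Yi, of B] YB trace_neg by simp
  then have tB: "trace B = 0" by simp
  have "X ** (A ** B) ** matrix_inv X = (X ** A ** matrix_inv X) ** (X ** B ** matrix_inv X)"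
  proof -
    have "(X ** A ** matrix_inv X) ** (X ** B ** matrix_inv X) = X ** A ** (matrix_inv X ** X) ** B ** matrix_inv X"
      by (simp add: matrix_mul_assoc)
    then show ?thesis using Xi by (simp add: matrix_mul_rid matrix_mul_assoc)
  qed
  then have "X ** (A ** B) ** matrix_inv X = - (A ** B)" using XA XB by simp
  then have "trace (A ** B) = - trace (A ** B)"
    using trace_conj[OF Xi, of "A ** B"] trace_neg by simp
  then have "trace (A ** B) = 0" by simp
  then show ?thesis using tA tB A_def B_def by simp
qed



lemma ii: "\<i> * \<i> = -1" by simp

definition qm :: "complex \<Rightarrow> complex \<Rightarrow> complex \<Rightarrow> complex \<Rightarrow> cmat" where
  "qm x0 x1 x2 x3 = mk (x0 + \<i> * x1) (x2 + \<i> * x3) (- x2 + \<i> * x3) (x0 - \<i> * x1)"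

lemma qm_mult: "qm a0 a1 a2 a3 ** qm c0 c1 c2 c3 =
   qm (a0 * c0 - a1 * c1 - a2 * c2 - a3 * c3)
      (a0 * c1 + a1 * c0 + a2 * c3 - a3 * c2)
      (a0 * c2 - a1 * c3 + a2 * c0 + a3 * c1)
      (a0 * c3 + a1 * c2 - a2 * c1 + a3 * c0)"
  unfolding qm_def by (simp only: mk_mult mk_eq) (use ii in \<open>intro conjI; algebra\<close>)

lemma qm_det: "det (qm x0 x1 x2 x3) = x0 * x0 + x1 * x1 + x2 * x2 + x3 * x3"
  unfolding qm_def by simp (use ii in algebra)

lemma qm_trace: "trace (qm x0 x1 x2 x3) = 2 * x0"
  unfolding qm_def by simp

lemma qm_neg: "- qm x0 x1 x2 x3 = qm (-x0) (-x1) (-x2) (-x3)"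
  unfolding qm_def by simp

lemma qm_eq: "qm a0 a1 a2 a3 = qm c0 c1 c2 c3 \<longleftrightarrow> a0 = c0 \<and> a1 = c1 \<and> a2 = c2 \<and> a3 = c3"
proof
  assume h: "qm a0 a1 a2 a3 = qm c0 c1 c2 c3"
  then have e: "a0 + \<i> * a1 = c0 + \<i> * c1" "a2 + \<i> * a3 = c2 + \<i> * c3"
     "- a2 + \<i> * a3 = - c2 + \<i> * c3" "a0 - \<i> * a1 = c0 - \<i> * c1"
    unfolding qm_def by simp_all
  have "a0 = c0" using e(1) e(4) by algebra
  moreover have "\<i> * a1 = \<i> * c1" using e(1) e(4) by algebra
  then have "a1 = c1" by simp
  moreover have "a2 = c2" using e(2) e(3) by algebra
  moreover have "\<i> * a3 = \<i> * c3" using e(2) e(3) by algebra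
  then have "a3 = c3" by simp
  ultimately show "a0 = c0 \<and> a1 = c1 \<and> a2 = c2 \<and> a3 = c3" by blast
qed simp

lemma qm_inv: "x0 * x0 + x1 * x1 + x2 * x2 + x3 * x3 = 1 \<Longrightarrow>
   matrix_inv (qm x0 x1 x2 x3) = qm x0 (-x1) (-x2) (-x3)"
  by (rule inv_unique) (simp_all add: qm_mult mat1_mk qm_def[of 1 0 0 0, simplified, symmetric] algebra_simps)

lemma qm_1: "mat 1 = qm 1 0 0 0" by (simp add: qm_def mat1_mk)
lemma qm_I: "Is = qm 0 1 0 0" by (simp add: qm_def Is_def)
lemma qm_J: "Js = qm 0 0 1 0" by (simp add: qm_def Js_def)
lemma qm_K: "Ks = qm 0 0 0 1" by (simp add: qm_def Ks_def)

definition r2 :: complex where "r2 = complex_of_real (1 / sqrt 2)"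
lemma r2_sq: "r2 * r2 = 1/2"
proof -
  have "(1 / sqrt 2) * (1 / sqrt 2) = (1/2::real)" by (simp add: real_sqrt_mult[symmetric])
  then show ?thesis unfolding r2_def by (metis of_real_mult of_real_divide of_real_1 of_real_numeral)
qed



definition rhoT :: "cmat \<Rightarrow> mgen \<Rightarrow> cmat" where
  "rhoT T g = (case g of MT \<Rightarrow> T | MA \<Rightarrow> Is | MB \<Rightarrow> Js)"
definition FT :: "cmat \<Rightarrow> mgen word \<Rightarrow> complex" where "FT T = pchar (rhoT T)"
definition cj :: "cmat \<Rightarrow> cmat \<Rightarrow> cmat" where "cj T M = matrix_inv T ** M ** T"

lemma all_mgen: "(\<forall>g. P g) \<longleftrightarrow> P MT \<and> P MA \<and> P MB" by (metis mgen.exhaust)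
lemma all_sgen: "(\<forall>g. P g) \<longleftrightarrow> P SA \<and> P SB" by (metis sgen.exhaust)

lemma rhoT_simps[simp]: "rhoT T MT = T" "rhoT T MA = Is" "rhoT T MB = Js"
  by (simp_all add: rhoT_def)

lemma rhoT_S: "rhoT T \<circ> sgen_to_mgen = sig0"
  by (rule ext) (simp add: sig0_def sgen_to_mgen_def split: sgen.split)

lemma eval_conj_t: "mat_eval \<rho> (conj_t g) = matrix_inv (\<rho> MT) ** \<rho> (sgen_to_mgen g) ** \<rho> MT"
  by (simp add: conj_t_def matrix_mul_rid matrix_mul_assoc)

lemma s2m[simp]: "sgen_to_mgen SA = MA" "sgen_to_mgen SB = MB" by (simp_all add: sgen_to_mgen_def)

lemma psl_rep_rhoT: "psl_rep_M \<phi> (rhoT T) \<longleftrightarrow> det T = 1 \<and>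
   psl_eq (cj T Is) (mat_eval sig0 (\<phi> SA)) \<and> psl_eq (cj T Js) (mat_eval sig0 (\<phi> SB))"
  unfolding psl_rep_M_def all_mgen all_sgen eval_conj_t mat_eval_embed rhoT_S cj_def
  by (simp add: det_IJK)

lemma sl_rep_rhoT: "sl_rep_M \<phi> (rhoT T) \<longleftrightarrow> det T = 1 \<and>
   cj T Is = mat_eval sig0 (\<phi> SA) \<and> cj T Js = mat_eval sig0 (\<phi> SB)"
  unfolding sl_rep_M_def all_mgen all_sgen eval_conj_t mat_eval_embed rhoT_S cj_def
  by (simp add: det_IJK)

lemma trace_sq_psl: "psl_eq A B \<Longrightarrow> (trace A)^2 = (trace (B::cmat))^2"
  by (auto simp: psl_eq_def trace_neg)

lemma pchar_conj: fixes Q Qi :: cmat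
  assumes "Q ** Qi = mat 1" "Qi ** Q = mat 1" "\<forall>g. det (\<rho> g) = 1"
  shows "pchar (\<lambda>g. Qi ** \<rho> g ** Q) = pchar \<rho>"
  unfolding pchar_def using mat_eval_conj[OF assms] trace_conj[OF assms(2,1)] by simp

lemma pchar_sign: assumes "\<forall>g. \<rho>' g = \<rho> g \<or> \<rho>' g = - \<rho> g" "\<forall>g. det (\<rho> g) = 1"
  shows "pchar \<rho>' = pchar \<rho>"
  unfolding pchar_def using mat_eval_sign[OF assms] trace_sq_psl by blast

lemma rbar_FT: "rbar (FT T) = pchar sig0"
  unfolding rbar_def FT_def pchar_def mat_eval_embed rhoT_S by simp

lemma det_conj: fixes Q Qi M :: cmat assumes "Qi ** Q = mat 1" shows "det (Qi ** M ** Q) = det M"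
proof -
  have "det Qi * det Q = 1" using assms det_mul[of Qi Q] by (simp add: mat1_mk)
  then show ?thesis by (simp add: det_mul algebra_simps)
qed

lemma psl_eq_conj: "psl_eq X Y \<Longrightarrow> psl_eq (Qi ** X ** Q) (Qi ** Y ** (Q::cmat))"
  by (auto simp: psl_eq_def)

lemma conj_rep: fixes Q Qi :: cmat
  assumes QQ: "Q ** Qi = mat 1" "Qi ** Q = mat 1"
  shows "psl_rep_M \<phi> \<rho> \<Longrightarrow> psl_rep_M \<phi> (\<lambda>g. Qi ** \<rho> g ** Q)"
    and "sl_rep_M \<phi> \<rho> \<Longrightarrow> sl_rep_M \<phi> (\<lambda>g. Qi ** \<rho> g ** Q)"
proof -
  assume h: "psl_rep_M \<phi> \<rho>"
  then have d: "\<forall>g. det (\<rho> g) = 1" by (simp add: psl_rep_M_def)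
  show "psl_rep_M \<phi> (\<lambda>g. Qi ** \<rho> g ** Q)"
    using h d unfolding psl_rep_M_def mat_eval_conj[OF QQ d] det_conj[OF QQ(2)]
    by (simp add: psl_eq_conj)
next
  assume h: "sl_rep_M \<phi> \<rho>"
  then have d: "\<forall>g. det (\<rho> g) = 1" by (simp add: sl_rep_M_def)
  show "sl_rep_M \<phi> (\<lambda>g. Qi ** \<rho> g ** Q)"
    using h d unfolding sl_rep_M_def mat_eval_conj[OF QQ d] det_conj[OF QQ(2)]
    by simp
qed

lemma sl_psl: "sl_rep_M \<phi> \<rho> \<Longrightarrow> psl_rep_M \<phi> \<rho>"
  by (simp add: sl_rep_M_def psl_rep_M_def psl_eq_def)

lemma tr_IJK: "trace Is = 0" "trace Js = 0" "trace Ks = 0"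
  by (simp_all add: Is_def Js_def Ks_def)

lemma normalize:
  assumes rep: "psl_rep_M \<phi> \<rho>" and rb: "rbar (pchar \<rho>) = pchar sig0"
  shows "\<exists>Q Qi T. Q ** Qi = mat 1 \<and> Qi ** Q = mat 1 \<and> (\<lambda>g. Qi ** \<rho> g ** Q) = rhoT T
     \<and> psl_rep_M \<phi> (rhoT T) \<and> pchar \<rho> = FT T \<and> (sl_rep_M \<phi> \<rho> \<longrightarrow> sl_rep_M \<phi> (rhoT T))"
proof -
  have d: "\<forall>g. det (\<rho> g) = 1" using rep by (simp add: psl_rep_M_def)
  have rb': "pchar \<rho> (embed_word w) = pchar sig0 w" for w
    using rb unfolding rbar_def by metis
  have "(trace (\<rho> MA))^2 = 0"
    using rb'[of "[(False,SA)]"] by (simp add: pchar_def embed_word_def matrix_mul_rid sig0_def tr_IJK)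
  then have tA: "trace (\<rho> MA) = 0" by simp
  have "(trace (\<rho> MB))^2 = 0"
    using rb'[of "[(False,SB)]"] by (simp add: pchar_def embed_word_def matrix_mul_rid sig0_def tr_IJK)
  then have tB: "trace (\<rho> MB) = 0" by simp
  have "(trace (\<rho> MA ** \<rho> MB))^2 = 0"
    using rb'[of "[(False,SA),(False,SB)]"] by (simp add: pchar_def embed_word_def matrix_mul_rid sig0_def tr_IJK IJ)
  then have tAB: "trace (\<rho> MA ** \<rho> MB) = 0" by simp
  obtain Q Qi where QQ: "Q ** Qi = mat 1" "Qi ** Q = mat 1" "Qi ** \<rho> MA ** Q = Is" "Qi ** \<rho> MB ** Q = Js"
    using NF[OF _ _ tA tB tAB] d by blast
  define T where "T = Qi ** \<rho> MT ** Q"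
  have eq: "(\<lambda>g. Qi ** \<rho> g ** Q) = rhoT T"
    by (rule ext) (simp add: rhoT_def T_def QQ split: mgen.split)
  have "psl_rep_M \<phi> (rhoT T)" using conj_rep(1)[OF QQ(1,2) rep] eq by simp
  moreover have "pchar \<rho> = FT T" using pchar_conj[OF QQ(1,2) d] eq by (simp add: FT_def)
  moreover have "sl_rep_M \<phi> \<rho> \<longrightarrow> sl_rep_M \<phi> (rhoT T)" using conj_rep(2)[OF QQ(1,2)] eq by metis
  ultimately show ?thesis using QQ eq by blast
qed

lemma inv_det1: fixes T :: cmat assumes "det T = 1"
  shows "det (matrix_inv T) = 1" "matrix_inv (matrix_inv T) = T"
proof -
  have "det (T ** matrix_inv T) = 1" using det1_inv assms by (simp add: mat1_mk)
  then show d: "det (matrix_inv T) = 1" using assms by (simp add: det_mul)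
  show "matrix_inv (matrix_inv T) = T" using det1_inv[OF assms] by (intro inv_unique) auto
qed

lemma cj_neg: "det T = 1 \<Longrightarrow> cj (- T) M = cj T M"
  by (simp add: cj_def inv_neg)

lemma unique_T:
  fixes T T' :: cmat
  assumes "det T = 1" "det T' = 1" "cj T Is = cj T' Is" "cj T Js = cj T' Js"
  shows "T' = T \<or> T' = - T"
proof -
  have h1: "matrix_inv T ** Is ** matrix_inv (matrix_inv T) = cj T Is"
    using inv_det1[OF assms(1)] by (simp add: cj_def)
  have h2: "matrix_inv T' ** Is ** matrix_inv (matrix_inv T') = cj T Is"
    using inv_det1[OF assms(2)] assms(3) by (simp add: cj_def)
  have h3: "matrix_inv T ** Js ** matrix_inv (matrix_inv T) = cj T Js"
    using inv_det1[OF assms(1)] by (simp add: cj_def)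
  have h4: "matrix_inv T' ** Js ** matrix_inv (matrix_inv T') = cj T Js"
    using inv_det1[OF assms(2)] assms(4) by (simp add: cj_def)
  define Z where "Z = T' ** matrix_inv T"
  have ZI: "Z ** Is = Is ** Z"
    using comm_from[OF inv_det1(1)[OF assms(1)] inv_det1(1)[OF assms(2)] h1 h2] inv_det1(2)[OF assms(2)]
    by (simp add: Z_def)
  have ZJ: "Z ** Js = Js ** Z"
    using comm_from[OF inv_det1(1)[OF assms(1)] inv_det1(1)[OF assms(2)] h3 h4] inv_det1(2)[OF assms(2)]
    by (simp add: Z_def)
  obtain p q r s where Z: "Z = mk p q r s" by (rule mk_cases)
  have c: "p * 0 + q * (-\<i>) = \<i> * q + 0 * s" "r * \<i> + s * 0 = 0 * p + (-\<i>) * r"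
    using ZI unfolding Z Is_def mk_mult mk_eq by blast+
  have "2 * \<i> * q = 0" using c(1) by algebra
  then have q0: "q = 0" by simp
  have "2 * \<i> * r = 0" using c(2) by algebra
  then have r0: "r = 0" by simp
  have c2: "p * 1 + q * 0 = 0 * q + 1 * s"
    using ZJ unfolding Z Js_def mk_mult mk_eq by blast
  then have "s = p" by simp
  then have Zp: "Z = mk p 0 0 p" using Z q0 r0 by simp
  have "det Z = 1" using assms inv_det1(1)[OF assms(1)] by (simp add: Z_def det_mul)
  then have "p * p = 1" using Zp by simp
  then have p: "p = 1 \<or> p = -1" by (metis mult_cancel_left1 square_eq_1_iff)
  have "Z ** T = T'" using det1_inv(2)[OF assms(1)] by (simp add: Z_def matrix_mul_assoc[symmetric] matrix_mul_rid)
  then show ?thesis using p Zp by (cases T rule: mk_cases) auto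
qed



lemma psl_eq_neg_iff: "psl_eq X (- Y) \<longleftrightarrow> psl_eq X (Y::cmat)"
  by (auto simp: psl_eq_def)

lemma psl_eq_refl: "psl_eq X X" by (simp add: psl_eq_def)

lemma sol_char:
  assumes U: "psl_eq (mat_eval sig0 (\<phi> SA)) U" and V: "psl_eq (mat_eval sig0 (\<phi> SB)) V"
   and T1: "det T1 = 1" "cj T1 Is = U" "cj T1 Js = V"
   and T2: "det T2 = 1" "cj T2 Is = U" "cj T2 Js = - V"
   and T3: "det T3 = 1" "cj T3 Is = - U" "cj T3 Js = V"
   and T4: "det T4 = 1" "cj T4 Is = - U" "cj T4 Js = - V"
  shows "{T. psl_rep_M \<phi> (rhoT T)} = {T1, -T1, T2, -T2, T3, -T3, T4, -T4}"
    and "\<exists>Tk\<in>{T1,T2,T3,T4}. {T. sl_rep_M \<phi> (rhoT T)} = {Tk, -Tk}"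
proof -
  have key: "T = Tk \<or> T = - Tk" if "det T = 1" "det Tk = 1" "cj T Is = cj Tk Is" "cj T Js = cj Tk Js" for T Tk
    using unique_T[of Tk T] that by simp
  have neg: "det (- T) = 1 \<and> cj (- T) M = cj T M" if "det T = 1" for T M
    using that det_neg cj_neg by simp
  show "{T. psl_rep_M \<phi> (rhoT T)} = {T1, -T1, T2, -T2, T3, -T3, T4, -T4}"
  proof (intro equalityI subsetI)
    fix T assume "T \<in> {T. psl_rep_M \<phi> (rhoT T)}"
    then have h: "det T = 1" "psl_eq (cj T Is) (mat_eval sig0 (\<phi> SA))" "psl_eq (cj T Js) (mat_eval sig0 (\<phi> SB))"
      by (simp_all add: psl_rep_rhoT)
    have a: "cj T Is = U \<or> cj T Is = - U" using psl_eq_trans[OF h(2) U] by (simp add: psl_eq_def)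
    have b: "cj T Js = V \<or> cj T Js = - V" using psl_eq_trans[OF h(3) V] by (simp add: psl_eq_def)
    consider "cj T Is = U" "cj T Js = V" | "cj T Is = U" "cj T Js = - V"
      | "cj T Is = - U" "cj T Js = V" | "cj T Is = - U" "cj T Js = - V" using a b by blast
    then show "T \<in> {T1, -T1, T2, -T2, T3, -T3, T4, -T4}"
    proof cases
      case 1 then have "T = T1 \<or> T = - T1" using key[OF h(1) T1(1)] T1(2,3) by simp
      then show ?thesis by blast
    next
      case 2 then have "T = T2 \<or> T = - T2" using key[OF h(1) T2(1)] T2(2,3) by simp
      then show ?thesis by blast
    next
      case 3 then have "T = T3 \<or> T = - T3" using key[OF h(1) T3(1)] T3(2,3) by simp
      then show ?thesis by blast
    next
      case 4 then have "T = T4 \<or> T = - T4" using key[OF h(1) T4(1)] T4(2,3) by simp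
      then show ?thesis by blast
    qed
  next
    fix T assume "T \<in> {T1, -T1, T2, -T2, T3, -T3, T4, -T4}"
    then obtain Tk where Tk: "Tk \<in> {T1,T2,T3,T4}" "T = Tk \<or> T = - Tk" by auto
    have dk: "det Tk = 1" using Tk(1) T1(1) T2(1) T3(1) T4(1) by blast
    have "cj Tk Is = U \<or> cj Tk Is = - U" using Tk(1) T1(2) T2(2) T3(2) T4(2) by blast
    moreover have "cj Tk Js = V \<or> cj Tk Js = - V" using Tk(1) T1(3) T2(3) T3(3) T4(3) by blast
    ultimately have "psl_eq (cj Tk Is) U" "psl_eq (cj Tk Js) V" unfolding psl_eq_def by blast+
    then have "psl_eq (cj Tk Is) (mat_eval sig0 (\<phi> SA))" "psl_eq (cj Tk Js) (mat_eval sig0 (\<phi> SB))"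
      using psl_eq_trans psl_eq_sym U V by blast+
    then show "T \<in> {T. psl_rep_M \<phi> (rhoT T)}"
      using Tk(2) dk neg[OF dk] by (auto simp: psl_rep_rhoT)
  qed
  have a: "mat_eval sig0 (\<phi> SA) = U \<or> mat_eval sig0 (\<phi> SA) = - U" using U by (simp add: psl_eq_def)
  have b: "mat_eval sig0 (\<phi> SB) = V \<or> mat_eval sig0 (\<phi> SB) = - V" using V by (simp add: psl_eq_def)
  have gen: "{T. sl_rep_M \<phi> (rhoT T)} = {Tk, -Tk}"
    if "det Tk = 1" "cj Tk Is = mat_eval sig0 (\<phi> SA)" "cj Tk Js = mat_eval sig0 (\<phi> SB)" for Tk
  proof (intro equalityI subsetI)
    fix T assume "T \<in> {T. sl_rep_M \<phi> (rhoT T)}"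
    then have "det T = 1" "cj T Is = cj Tk Is" "cj T Js = cj Tk Js" using that by (simp_all add: sl_rep_rhoT)
    then show "T \<in> {Tk, -Tk}" using key that(1) by blast
  next
    fix T assume "T \<in> {Tk, -Tk}"
    then show "T \<in> {T. sl_rep_M \<phi> (rhoT T)}" using that neg[OF that(1)] by (auto simp: sl_rep_rhoT)
  qed
  show "\<exists>Tk\<in>{T1,T2,T3,T4}. {T. sl_rep_M \<phi> (rhoT T)} = {Tk, -Tk}"
  proof -
    consider "mat_eval sig0 (\<phi> SA) = U" "mat_eval sig0 (\<phi> SB) = V"
      | "mat_eval sig0 (\<phi> SA) = U" "mat_eval sig0 (\<phi> SB) = - V"
      | "mat_eval sig0 (\<phi> SA) = - U" "mat_eval sig0 (\<phi> SB) = V"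
      | "mat_eval sig0 (\<phi> SA) = - U" "mat_eval sig0 (\<phi> SB) = - V" using a b by blast
    then show ?thesis
    proof cases
      case 1 then show ?thesis using gen[of T1] T1 by simp
    next
      case 2 then show ?thesis using gen[of T2] T2 by simp
    next
      case 3 then show ?thesis using gen[of T3] T3 by simp
    next
      case 4 then show ?thesis using gen[of T4] T4 by simp
    qed
  qed
qed

lemma FT_neg: "det T = 1 \<Longrightarrow> FT (- T) = FT T"
  unfolding FT_def
  by (rule pchar_sign) (auto simp: rhoT_def det_IJK split: mgen.split)

definition pw :: "cmat \<Rightarrow> nat \<Rightarrow> cmat" where "pw M n = (((**) M) ^^ n) (mat 1)"

lemma psl_order_pw: "psl_order M = (if \<exists>n>0. psl_eq (pw M n) (mat 1)
                  then LEAST n. n > 0 \<and> psl_eq (pw M n) (mat 1) else 0)"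
  unfolding psl_order_def pw_def by (rule refl)

lemma pw_0[simp]: "pw M 0 = mat 1" by (simp add: pw_def)
lemma pw_Suc: "pw M (Suc n) = M ** pw M n" by (simp add: pw_def)

lemma pw_conj: fixes Q Qi M :: cmat assumes "Qi ** Q = mat 1" "Q ** Qi = mat 1"
  shows "pw (Q ** M ** Qi) n = Q ** pw M n ** Qi"
proof (induction n)
  case 0 then show ?case using assms by (simp add: matrix_mul_rid)
next
  case (Suc n)
  have "Q ** M ** Qi ** (Q ** pw M n ** Qi) = Q ** M ** (Qi ** Q) ** pw M n ** Qi"
    by (simp add: matrix_mul_assoc)
  then show ?case using Suc assms by (simp add: pw_Suc matrix_mul_rid matrix_mul_assoc)
qed

lemma pw_neg: "pw (- M) n = pw M n \<or> pw (- M) n = - pw M n"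
  by (induction n) (auto simp: pw_Suc)

lemma psl_order_cong: "(\<And>n. psl_eq (pw M n) (mat 1) \<longleftrightarrow> psl_eq (pw N n) (mat 1)) \<Longrightarrow> psl_order M = psl_order N"
  unfolding psl_order_pw by (simp only:)

lemma psl_order_conj: fixes Q Qi M :: cmat assumes "Qi ** Q = mat 1" "Q ** Qi = mat 1"
  shows "psl_order (Q ** M ** Qi) = psl_order M"
proof (rule psl_order_cong)
  fix n
  have e: "Qi ** (Q ** X ** Qi) ** Q = X" for X
  proof -
    have "Qi ** (Q ** X ** Qi) ** Q = (Qi ** Q) ** X ** (Qi ** Q)" by (simp only: matrix_mul_assoc)
    then show ?thesis by (simp add: assms matrix_mul_lid matrix_mul_rid)
  qed
  have m: "Q ** mat 1 ** Qi = mat 1" "Qi ** mat 1 ** Q = mat 1" using assms by (simp_all add: matrix_mul_rid)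
  have pc: "pw (Q ** M ** Qi) n = Q ** pw M n ** Qi" by (rule pw_conj[OF assms])
  show "psl_eq (pw (Q ** M ** Qi) n) (mat 1) \<longleftrightarrow> psl_eq (pw M n) (mat 1)"
  proof
    assume "psl_eq (pw (Q ** M ** Qi) n) (mat 1)"
    then have "psl_eq (Q ** pw M n ** Qi) (mat 1)" by (simp only: pc)
    then have "psl_eq (Qi ** (Q ** pw M n ** Qi) ** Q) (Qi ** mat 1 ** Q)" by (rule psl_eq_conj)
    then show "psl_eq (pw M n) (mat 1)" by (simp only: e m)
  next
    assume "psl_eq (pw M n) (mat 1)"
    then have "psl_eq (Q ** pw M n ** Qi) (Q ** mat 1 ** Qi)" by (rule psl_eq_conj)
    then show "psl_eq (pw (Q ** M ** Qi) n) (mat 1)" by (simp only: pc m)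
  qed
qed

lemma psl_order_neg: "psl_order (- M) = psl_order M"
proof (rule psl_order_cong)
  fix n show "psl_eq (pw (- M) n) (mat 1) \<longleftrightarrow> psl_eq (pw M n) (mat 1)"
    using pw_neg[of M n] by (auto simp: psl_eq_def)
qed

lemma longitude_rhoT: "mat_eval (rhoT T) longitude = - mat 1"
  by (simp add: longitude_def inv_Is inv_Js matrix_mul_rid IJ JK Is_sq)



lemma generic:
  assumes U: "psl_eq (mat_eval sig0 (\<phi> SA)) U" and V: "psl_eq (mat_eval sig0 (\<phi> SB)) V"
   and T1: "det T1 = 1" "cj T1 Is = U" "cj T1 Js = V"
   and T2: "det T2 = 1" "cj T2 Is = U" "cj T2 Js = - V"
   and T3: "det T3 = 1" "cj T3 Is = - U" "cj T3 Js = V"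
   and T4: "det T4 = 1" "cj T4 Is = - U" "cj T4 Js = - V"
   and sig: "pchar \<sigma> = pchar sig0"
  shows "rbar_fibre \<phi> (pchar \<sigma>) = {FT T1, FT T2, FT T3, FT T4}"
    and "\<exists>Tk\<in>{T1,T2,T3,T4}. {chi \<in> rbar_fibre \<phi> (pchar \<sigma>). lifts_to_X \<phi> chi} = {FT Tk}"
    and "\<forall>\<rho>. psl_rep_M \<phi> \<rho> \<and> pchar \<rho> \<in> rbar_fibre \<phi> (pchar \<sigma>) \<longrightarrow>
          psl_eq (mat_eval \<rho> longitude) (mat 1) \<and> (\<exists>Tk\<in>{T1,T2,T3,T4}. psl_order (\<rho> MT) = psl_order Tk)"
proof -
  note SC = sol_char[OF U V T1 T2 T3 T4]
  have dk: "det Tk = 1" if "Tk \<in> {T1,T2,T3,T4}" for Tk using that T1(1) T2(1) T3(1) T4(1) by blast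
  have fib: "rbar_fibre \<phi> (pchar \<sigma>) = FT ` {T. psl_rep_M \<phi> (rhoT T)}"
  proof (intro equalityI subsetI)
    fix chi assume "chi \<in> rbar_fibre \<phi> (pchar \<sigma>)"
    then obtain \<rho> where r: "chi = pchar \<rho>" "psl_rep_M \<phi> \<rho>" "rbar (pchar \<rho>) = pchar sig0"
      unfolding rbar_fibre_def Xbar_M_def sig by blast
    obtain Q Qi T where "psl_rep_M \<phi> (rhoT T)" "pchar \<rho> = FT T" using normalize[OF r(2,3)] by blast
    then show "chi \<in> FT ` {T. psl_rep_M \<phi> (rhoT T)}" using r(1) by blast
  next
    fix chi assume "chi \<in> FT ` {T. psl_rep_M \<phi> (rhoT T)}"
    then obtain T where "chi = FT T" "psl_rep_M \<phi> (rhoT T)" by blast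
    then show "chi \<in> rbar_fibre \<phi> (pchar \<sigma>)"
      unfolding rbar_fibre_def Xbar_M_def sig using rbar_FT by (auto simp: FT_def)
  qed
  have lif: "{chi \<in> rbar_fibre \<phi> (pchar \<sigma>). lifts_to_X \<phi> chi} = FT ` {T. sl_rep_M \<phi> (rhoT T)}"
  proof (intro equalityI subsetI)
    fix chi assume h: "chi \<in> {chi \<in> rbar_fibre \<phi> (pchar \<sigma>). lifts_to_X \<phi> chi}"
    then obtain xi where "xi \<in> X_M \<phi>" "chi = (\<lambda>w. (xi w)\<^sup>2)" unfolding lifts_to_X_def by blast
    then obtain \<rho> where r: "sl_rep_M \<phi> \<rho>" "chi = pchar \<rho>"
      unfolding X_M_def by (auto simp: pchar_def schar_def)
    have "rbar (pchar \<rho>) = pchar sig0" using h r(2) sig unfolding rbar_fibre_def by simp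
    then obtain Q Qi T where "sl_rep_M \<phi> (rhoT T)" "pchar \<rho> = FT T"
      using normalize[OF sl_psl[OF r(1)]] r(1) by blast
    then show "chi \<in> FT ` {T. sl_rep_M \<phi> (rhoT T)}" using r(2) by blast
  next
    fix chi assume "chi \<in> FT ` {T. sl_rep_M \<phi> (rhoT T)}"
    then obtain T where T: "chi = FT T" "sl_rep_M \<phi> (rhoT T)" by blast
    have "chi \<in> rbar_fibre \<phi> (pchar \<sigma>)" using fib T sl_psl by blast
    moreover have "lifts_to_X \<phi> chi"
      unfolding lifts_to_X_def X_M_def using T
      by (intro bexI[of _ "schar (rhoT T)"]) (auto simp: FT_def pchar_def schar_def)
    ultimately show "chi \<in> {chi \<in> rbar_fibre \<phi> (pchar \<sigma>). lifts_to_X \<phi> chi}" by blast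
  qed
  show "rbar_fibre \<phi> (pchar \<sigma>) = {FT T1, FT T2, FT T3, FT T4}"
    unfolding fib SC(1) using FT_neg T1(1) T2(1) T3(1) T4(1) by auto
  show "\<exists>Tk\<in>{T1,T2,T3,T4}. {chi \<in> rbar_fibre \<phi> (pchar \<sigma>). lifts_to_X \<phi> chi} = {FT Tk}"
  proof -
    obtain Tk where Tk: "Tk \<in> {T1,T2,T3,T4}" "{T. sl_rep_M \<phi> (rhoT T)} = {Tk, -Tk}" using SC(2) by blast
    then have "FT ` {T. sl_rep_M \<phi> (rhoT T)} = {FT Tk}" using FT_neg[OF dk[OF Tk(1)]] by simp
    then show ?thesis using Tk(1) lif by blast
  qed
  show "\<forall>\<rho>. psl_rep_M \<phi> \<rho> \<and> pchar \<rho> \<in> rbar_fibre \<phi> (pchar \<sigma>) \<longrightarrow>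
          psl_eq (mat_eval \<rho> longitude) (mat 1) \<and> (\<exists>Tk\<in>{T1,T2,T3,T4}. psl_order (\<rho> MT) = psl_order Tk)"
  proof (intro allI impI)
    fix \<rho> assume h: "psl_rep_M \<phi> \<rho> \<and> pchar \<rho> \<in> rbar_fibre \<phi> (pchar \<sigma>)"
    have d: "\<forall>g. det (\<rho> g) = 1" using h by (simp add: psl_rep_M_def)
    have "rbar (pchar \<rho>) = pchar sig0" using h sig unfolding rbar_fibre_def by simp
    then obtain Q Qi T where N: "Q ** Qi = mat 1" "Qi ** Q = mat 1" "(\<lambda>g. Qi ** \<rho> g ** Q) = rhoT T"
        "psl_rep_M \<phi> (rhoT T)"
      using normalize h by blast
    have bk: "Q ** (Qi ** X ** Q) ** Qi = X" for X
    proof -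
      have "Q ** (Qi ** X ** Q) ** Qi = (Q ** Qi) ** X ** (Q ** Qi)" by (simp only: matrix_mul_assoc)
      then show ?thesis by (simp add: N(1) matrix_mul_lid matrix_mul_rid)
    qed
    have "mat_eval (rhoT T) longitude = Qi ** mat_eval \<rho> longitude ** Q"
      using mat_eval_conj[OF N(1,2) d] N(3) by metis
    then have "mat_eval \<rho> longitude = Q ** (- mat 1) ** Qi" using bk longitude_rhoT by metis
    then have "mat_eval \<rho> longitude = - mat 1" using N(1) by (simp add: matrix_mul_rid)
    then have L: "psl_eq (mat_eval \<rho> longitude) (mat 1)" by (simp add: psl_eq_def)
    have "Qi ** \<rho> MT ** Q = T" using fun_cong[OF N(3), of MT] by simp
    then have "\<rho> MT = Q ** T ** Qi" using bk by metis
    then have o: "psl_order (\<rho> MT) = psl_order T" using psl_order_conj[OF N(2,1)] by simp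
    have "T \<in> {T1, -T1, T2, -T2, T3, -T3, T4, -T4}" using N(4) SC(1) by blast
    then obtain Tk where "Tk \<in> {T1,T2,T3,T4}" "T = Tk \<or> T = - Tk" by blast
    then show "psl_eq (mat_eval \<rho> longitude) (mat 1) \<and> (\<exists>Tk\<in>{T1,T2,T3,T4}. psl_order (\<rho> MT) = psl_order Tk)"
      using L o psl_order_neg by metis
  qed
qed



lemma qm_inv_r: "x0 * x0 + x1 * x1 + x2 * x2 + x3 * x3 = 1 \<Longrightarrow>
   cj (qm x0 x1 x2 x3) M = qm x0 (-x1) (-x2) (-x3) ** M ** qm x0 x1 x2 x3"
  by (simp add: cj_def qm_inv)

lemmas qsimps = qm_I qm_J qm_K qm_mult qm_eq qm_neg qm_det r2_sq

lemma final_from: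
  assumes U: "psl_eq (mat_eval sig0 (\<phi> SA)) U" and V: "psl_eq (mat_eval sig0 (\<phi> SB)) V"
   and T1: "det T1 = 1" "cj T1 Is = U" "cj T1 Js = V"
   and T2: "det T2 = 1" "cj T2 Is = U" "cj T2 Js = - V"
   and T3: "det T3 = 1" "cj T3 Is = - U" "cj T3 Js = V"
   and T4: "det T4 = 1" "cj T4 Is = - U" "cj T4 Js = - V"
   and sig: "pchar \<sigma> = pchar sig0"
   and b: "b1 \<phi> = k" and c: "card {FT T1, FT T2, FT T3, FT T4} = 2^(k-1)"
   and o2: "k = 2 \<Longrightarrow> \<forall>Tk\<in>{T1,T2,T3,T4}. psl_order Tk \<in> {2,4}"
   and o3: "k = 3 \<Longrightarrow> \<forall>Tk\<in>{T1,T2,T3,T4}. psl_order Tk \<in> {1,2}"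
  shows "card (rbar_fibre \<phi> (pchar \<sigma>)) = 2 ^ (b1 \<phi> - 1)
    \<and> card {chi \<in> rbar_fibre \<phi> (pchar \<sigma>). lifts_to_X \<phi> chi} = 1
    \<and> (\<forall>\<rho>. psl_rep_M \<phi> \<rho> \<and> pchar \<rho> \<in> rbar_fibre \<phi> (pchar \<sigma>) \<longrightarrow>
          psl_eq (mat_eval \<rho> longitude) (mat 1)
        \<and> (b1 \<phi> = 2 \<longrightarrow> psl_order (\<rho> MT) \<in> {2, 4})
        \<and> (b1 \<phi> = 3 \<longrightarrow> psl_order (\<rho> MT) \<in> {1, 2}))"
proof -
  note G = generic[OF U V T1 T2 T3 T4 sig]
  have 1: "card (rbar_fibre \<phi> (pchar \<sigma>)) = 2 ^ (b1 \<phi> - 1)" using G(1) b c by simp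
  have 2: "card {chi \<in> rbar_fibre \<phi> (pchar \<sigma>). lifts_to_X \<phi> chi} = 1" using G(2) by fastforce
  have 3: "\<forall>\<rho>. psl_rep_M \<phi> \<rho> \<and> pchar \<rho> \<in> rbar_fibre \<phi> (pchar \<sigma>) \<longrightarrow>
          psl_eq (mat_eval \<rho> longitude) (mat 1)
        \<and> (b1 \<phi> = 2 \<longrightarrow> psl_order (\<rho> MT) \<in> {2, 4})
        \<and> (b1 \<phi> = 3 \<longrightarrow> psl_order (\<rho> MT) \<in> {1, 2})"
  proof (intro allI impI)
    fix \<rho> assume h: "psl_rep_M \<phi> \<rho> \<and> pchar \<rho> \<in> rbar_fibre \<phi> (pchar \<sigma>)"
    obtain Tk where Tk: "Tk \<in> {T1,T2,T3,T4}" "psl_order (\<rho> MT) = psl_order Tk"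
      and L: "psl_eq (mat_eval \<rho> longitude) (mat 1)" using G(3) h by blast
    show "psl_eq (mat_eval \<rho> longitude) (mat 1)
        \<and> (b1 \<phi> = 2 \<longrightarrow> psl_order (\<rho> MT) \<in> {2, 4})
        \<and> (b1 \<phi> = 3 \<longrightarrow> psl_order (\<rho> MT) \<in> {1, 2})"
      using L Tk o2 o3 b by auto
  qed
  show ?thesis using 1 2 3 by blast
qed

lemma FT_cj:
  assumes D: "D = Is \<or> D = Js" and T: "det T = 1"
  shows "FT (matrix_inv D ** T ** D) = FT T"
proof -
  have dD: "det D = 1" using D det_IJK by auto
  have QQ: "D ** matrix_inv D = mat 1" "matrix_inv D ** D = mat 1" using det1_inv[OF dD] by auto
  have drho: "\<forall>g. det (rhoT T g) = 1" using T by (auto simp: rhoT_def det_IJK split: mgen.split)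
  have dc: "\<forall>g. det (matrix_inv D ** rhoT T g ** D) = 1" using drho det_conj[OF QQ(2)] by simp
  have s: "\<forall>g. rhoT (matrix_inv D ** T ** D) g = matrix_inv D ** rhoT T g ** D \<or>
             rhoT (matrix_inv D ** T ** D) g = - (matrix_inv D ** rhoT T g ** D)"
    using D by (auto simp: all_mgen inv_Is inv_Js q8_simps)
  have "FT (matrix_inv D ** T ** D) = pchar (\<lambda>g. matrix_inv D ** rhoT T g ** D)"
    unfolding FT_def by (rule pchar_sign[OF s dc])
  also have "\<dots> = FT T" unfolding FT_def by (rule pchar_conj[OF QQ drho])
  finally show ?thesis .
qed

lemma FT_qmI: "t0 * t0 + t1 * t1 + t2 * t2 + t3 * t3 = 1 \<Longrightarrow> FT (qm t0 t1 (-t2) (-t3)) = FT (qm t0 t1 t2 t3)"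
proof -
  assume n: "t0 * t0 + t1 * t1 + t2 * t2 + t3 * t3 = 1"
  have "matrix_inv Is ** qm t0 t1 t2 t3 ** Is = qm t0 t1 (-t2) (-t3)"
    unfolding inv_Is by (simp add: qsimps)
  moreover have "det (qm t0 t1 t2 t3) = 1" using n by (simp add: qm_det)
  ultimately show ?thesis using FT_cj[of Is "qm t0 t1 t2 t3"] by simp
qed

lemma FT_qmJ: "t0 * t0 + t1 * t1 + t2 * t2 + t3 * t3 = 1 \<Longrightarrow> FT (qm t0 (-t1) t2 (-t3)) = FT (qm t0 t1 t2 t3)"
proof -
  assume n: "t0 * t0 + t1 * t1 + t2 * t2 + t3 * t3 = 1"
  have "matrix_inv Js ** qm t0 t1 t2 t3 ** Js = qm t0 (-t1) t2 (-t3)"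
    unfolding inv_Js by (simp add: qsimps)
  moreover have "det (qm t0 t1 t2 t3) = 1" using n by (simp add: qm_det)
  ultimately show ?thesis using FT_cj[of Js "qm t0 t1 t2 t3"] by simp
qed

lemma FT_w1: "FT T [(False, MT)] = (trace T)^2"
  by (simp add: FT_def pchar_def matrix_mul_rid)
lemma FT_w2: "FT T [(False, MT), (False, MA)] = (trace (T ** Is))^2"
  by (simp add: FT_def pchar_def matrix_mul_rid)
lemma FT_w3: "FT T [(False, MT), (False, MB)] = (trace (T ** Js))^2"
  by (simp add: FT_def pchar_def matrix_mul_rid)

lemma psl_order_eqI:
  assumes "0 < n" "psl_eq (pw M n) (mat 1)" "\<forall>m. 0 < m \<and> m < n \<longrightarrow> \<not> psl_eq (pw M m) (mat 1)"
  shows "psl_order M = n"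
proof -
  have "(LEAST n. n > 0 \<and> psl_eq (pw M n) (mat 1)) = n"
    by (rule Least_equality) (use assms in \<open>auto simp: not_less[symmetric]\<close>)
  then show ?thesis unfolding psl_order_pw using assms by auto
qed

lemma pw_1: "pw M 1 = M" by (simp add: pw_def matrix_mul_rid)
lemma pw_2: "pw M 2 = M ** M" by (simp add: pw_def numeral_2_eq_2 matrix_mul_rid)
lemma pw_3: "pw M 3 = M ** (M ** M)" by (simp add: pw_def numeral_3_eq_3 matrix_mul_rid)
lemma pw_4: "pw M 4 = M ** (M ** (M ** M))"
  by (simp add: pw_def eval_nat_numeral matrix_mul_rid)

lemma psl_eq_qm1: "psl_eq (qm a0 a1 a2 a3) (mat 1) \<longleftrightarrow> (a0 = 1 \<or> a0 = -1) \<and> a1 = 0 \<and> a2 = 0 \<and> a3 = 0"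
  by (auto simp: psl_eq_def qm_1 qm_neg qm_eq)

lemma order2: "a0 = 0 \<Longrightarrow> a1 * a1 + a2 * a2 + a3 * a3 = 1 \<Longrightarrow> psl_order (qm a0 a1 a2 a3) = 2"
proof -
  assume "a1 * a1 + a2 * a2 + a3 * a3 = 1" "a0 = 0"
  moreover then have "-(a1 * a1) - a2 * a2 - a3 * a3 = -1" by algebra
  ultimately show ?thesis
  by (intro psl_order_eqI) (auto simp: pw_Suc matrix_mul_rid qm_mult psl_eq_qm1 less_Suc_eq numeral_2_eq_2)
qed

lemma order1: "psl_order (qm 1 0 0 0) = 1"
  by (rule psl_order_eqI) (auto simp: pw_Suc matrix_mul_rid psl_eq_qm1)

lemma r2_sq2: "r2 * (r2 * x) = x / 2" by (simp add: mult.assoc[symmetric] r2_sq)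
lemma half_ne: fixes x :: complex assumes "x * x = 1/2"
  shows "x \<noteq> 0" "x \<noteq> 1" "x \<noteq> -1" "2 * x \<noteq> 1" "2 * x \<noteq> -1" "x * 2 \<noteq> 1" "x * 2 \<noteq> -1"
proof -
  have a: "(2*x)*(2*x) = 4*(x*x)" by algebra
  have "4*(x*x) = (2::complex)" by (subst assms) simp
  then have b: "(2*x)*(2*x) = 2" using a by simp
  have c: "(x*2)*(x*2) = 2" using b by (simp add: mult.commute)
  have d: "x * x \<noteq> 0" "x * x \<noteq> 1" by (subst assms, simp)+
  show "x \<noteq> 0" using d by auto
  show "x \<noteq> 1" using d by auto
  show "x \<noteq> -1" using d by auto
  have g: "y * y \<noteq> 2" if "y = 1 \<or> y = -1" for y :: complex using that by auto
  show "2 * x \<noteq> 1" "2 * x \<noteq> -1" using b g[of "2*x"] by auto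
  show "x * 2 \<noteq> 1" "x * 2 \<noteq> -1" using c g[of "x*2"] by auto
qed
lemmas r2_ne = half_ne[OF r2_sq]

lemma order4_case: "psl_order (qm r2 r2 0 0) = 4"
  by (rule psl_order_eqI) (auto simp: pw_Suc matrix_mul_rid qm_mult psl_eq_qm1 less_Suc_eq eval_nat_numeral r2_sq r2_sq2 r2_ne)



definition par :: "(sgen \<Rightarrow> sgen word) \<Rightarrow> sgen \<Rightarrow> sgen \<Rightarrow> bool" where
  "par \<phi> g h = odd (exp_sum h (\<phi> g))"

lemma z2_homs_char: "z2_homs_M \<phi> = {h. h MA = ((h MA \<and> par \<phi> SA SA) \<noteq> (h MB \<and> par \<phi> SA SB))
   \<and> h MB = ((h MA \<and> par \<phi> SB SA) \<noteq> (h MB \<and> par \<phi> SB SB))}"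
  unfolding z2_homs_M_def all_sgen z2_eval_embed z2_eval_S par_def
  by (auto simp: conj_t_def)

definition enc :: "bool \<Rightarrow> bool \<Rightarrow> bool \<Rightarrow> mgen \<Rightarrow> bool" where
  "enc x y z g = (case g of MT \<Rightarrow> x | MA \<Rightarrow> y | MB \<Rightarrow> z)"

lemma card_homs: "card {h::mgen \<Rightarrow> bool. P (h MA) (h MB)} = 2 * card {(y, z). P y z}"
proof -
  have e: "{h::mgen \<Rightarrow> bool. P (h MA) (h MB)} = (\<lambda>(x, y, z). enc x y z) ` (UNIV \<times> {(y, z). P y z})"
  proof (intro equalityI subsetI)
    fix h :: "mgen \<Rightarrow> bool" assume "h \<in> {h. P (h MA) (h MB)}"
    moreover have "h = enc (h MT) (h MA) (h MB)" by (rule ext) (simp add: enc_def split: mgen.split)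
    ultimately show "h \<in> (\<lambda>(x, y, z). enc x y z) ` (UNIV \<times> {(y, z). P y z})"
      by (intro image_eqI[of _ _ "(h MT, h MA, h MB)"]) auto
  qed (auto simp: enc_def)
  have i: "inj_on (\<lambda>(x, y, z). enc x y z) (UNIV \<times> {(y, z). P y z})"
  proof (rule inj_onI)
    fix a b assume "(case a of (x, y, z) \<Rightarrow> enc x y z) = (case b of (x, y, z) \<Rightarrow> enc x y z)"
      "a \<in> UNIV \<times> {(y, z). P y z}" "b \<in> UNIV \<times> {(y, z). P y z}"
    then show "a = b"
      by (cases a; cases b) (auto simp: enc_def fun_eq_iff all_mgen)
  qed
  have "card ((UNIV::bool set) \<times> {(y::bool, z::bool). P y z}) = 2 * card {(y, z). P y z}"
    by (simp add: card_cartesian_product card_UNIV_bool)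
  then show ?thesis unfolding e card_image[OF i] .
qed

lemma b1_eq: "card (z2_homs_M \<phi>) = 2 ^ k \<Longrightarrow> b1 \<phi> = k"
  unfolding b1_def by (rule the_equality) (auto simp: power_inject_exp)

lemma card_z2: "card (z2_homs_M \<phi>) = 2 * card {(y, z). y = ((y \<and> par \<phi> SA SA) \<noteq> (z \<and> par \<phi> SA SB))
   \<and> z = ((y \<and> par \<phi> SB SA) \<noteq> (z \<and> par \<phi> SB SB))}"
  unfolding z2_homs_char by (rule card_homs)

lemma b1_from: "{(y, z). y = ((y \<and> par \<phi> SA SA) \<noteq> (z \<and> par \<phi> SA SB))
   \<and> z = ((y \<and> par \<phi> SB SA) \<noteq> (z \<and> par \<phi> SB SB))} = S \<Longrightarrow> 2 * card S = 2 ^ k \<Longrightarrow> b1 \<phi> = k"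
  using card_z2[of \<phi>] b1_eq by simp

lemma b1_val:
  "par \<phi> SA SA \<and> \<not> par \<phi> SA SB \<and> \<not> par \<phi> SB SA \<and> par \<phi> SB SB \<Longrightarrow> b1 \<phi> = 3"
  "\<not> par \<phi> SA SA \<and> par \<phi> SA SB \<and> par \<phi> SB SA \<and> \<not> par \<phi> SB SB \<Longrightarrow> b1 \<phi> = 2"
  "par \<phi> SA SA \<and> \<not> par \<phi> SA SB \<and> par \<phi> SB SA \<and> par \<phi> SB SB \<Longrightarrow> b1 \<phi> = 2"
  "par \<phi> SA SA \<and> par \<phi> SA SB \<and> \<not> par \<phi> SB SA \<and> par \<phi> SB SB \<Longrightarrow> b1 \<phi> = 2"
  "\<not> par \<phi> SA SA \<and> par \<phi> SA SB \<and> par \<phi> SB SA \<and> par \<phi> SB SB \<Longrightarrow> b1 \<phi> = 1"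
  "par \<phi> SA SA \<and> par \<phi> SA SB \<and> par \<phi> SB SA \<and> \<not> par \<phi> SB SB \<Longrightarrow> b1 \<phi> = 1"
     apply (rule b1_from[where S = "{(False,False),(False,True),(True,False),(True,True)}"]; auto)
    apply (rule b1_from[where S = "{(False,False),(True,True)}"]; auto)
   apply (rule b1_from[where S = "{(False,False),(False,True)}"]; auto)
  apply (rule b1_from[where S = "{(False,False),(True,False)}"]; auto)
 apply (rule b1_from[where S = "{(False,False)}"]; auto)
  apply (rule b1_from[where S = "{(False,False)}"]; auto)
  done



lemma order4s: "psl_order (qm r2 0 0 (-r2)) = 4" "psl_order (qm r2 0 0 r2) = 4"
  "psl_order (qm r2 (-r2) 0 0) = 4" "psl_order (qm r2 r2 0 0) = 4"
  "psl_order (qm r2 0 r2 0) = 4" "psl_order (qm r2 0 (-r2) 0) = 4"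
  by (rule psl_order_eqI; auto simp: pw_Suc matrix_mul_rid qm_mult psl_eq_qm1 less_Suc_eq eval_nat_numeral r2_sq r2_sq2 r2_ne)+

lemma U_of: "psl_eq (mat_eval sig0 (\<phi> g)) (qs (par \<phi> g SA) (par \<phi> g SB))"
  using q8_eval[of "\<phi> g"] by (simp add: par_def)

abbreviation (input) FINAL where "FINAL \<phi> \<sigma> \<equiv> card (rbar_fibre \<phi> (pchar \<sigma>)) = 2 ^ (b1 \<phi> - 1)
    \<and> card {chi \<in> rbar_fibre \<phi> (pchar \<sigma>). lifts_to_X \<phi> chi} = 1
    \<and> (\<forall>\<rho>. psl_rep_M \<phi> \<rho> \<and> pchar \<rho> \<in> rbar_fibre \<phi> (pchar \<sigma>) \<longrightarrow>
          psl_eq (mat_eval \<rho> longitude) (mat 1)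
        \<and> (b1 \<phi> = 2 \<longrightarrow> psl_order (\<rho> MT) \<in> {2, 4})
        \<and> (b1 \<phi> = 3 \<longrightarrow> psl_order (\<rho> MT) \<in> {1, 2}))"

lemma case_JI:
  assumes p: "\<not> par \<phi> SA SA \<and> par \<phi> SA SB \<and> par \<phi> SB SA \<and> \<not> par \<phi> SB SB"
    and sig: "pchar \<sigma> = pchar sig0"
  shows "FINAL \<phi> \<sigma>"
proof -
  have U: "psl_eq (mat_eval sig0 (\<phi> SA)) Js" using U_of[of \<phi> SA] p by (simp add: qs_def)
  have V: "psl_eq (mat_eval sig0 (\<phi> SB)) Is" using U_of[of \<phi> SB] p by (simp add: qs_def)
  define T1 where "T1 = qm 0 r2 r2 0"
  define T2 where "T2 = qm r2 0 0 (-r2)"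
  define T3 where "T3 = qm r2 0 0 r2"
  define T4 where "T4 = qm 0 r2 (-r2) 0"
  have T1: "det T1 = 1" "cj T1 Is = Js" "cj T1 Js = Is" by (simp_all add: T1_def qm_inv_r qsimps)
  have T2: "det T2 = 1" "cj T2 Is = Js" "cj T2 Js = - Is" by (simp_all add: T2_def qm_inv_r qsimps)
  have T3: "det T3 = 1" "cj T3 Is = - Js" "cj T3 Js = Is" by (simp_all add: T3_def qm_inv_r qsimps)
  have T4: "det T4 = 1" "cj T4 Is = - Js" "cj T4 Js = - Is" by (simp_all add: T4_def qm_inv_r qsimps)
  have b: "b1 \<phi> = 2" using b1_val(2) p by blast
  have e1: "FT T4 = FT T1" using FT_qmI[of 0 r2 r2 0] by (simp add: T1_def T4_def r2_sq)
  have e2: "FT T3 = FT T2" using FT_qmI[of r2 0 0 "-r2"] by (simp add: T2_def T3_def r2_sq)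
  have n: "FT T1 \<noteq> FT T2"
  proof
    assume "FT T1 = FT T2"
    then have "FT T1 [(False, MT)] = FT T2 [(False, MT)]" by simp
    then show False by (simp add: FT_w1 T1_def T2_def qm_trace power2_eq_square r2_sq)
  qed
  have c: "card {FT T1, FT T2, FT T3, FT T4} = 2 ^ (2 - 1)"
    using n by (simp add: e1 e2 insert_commute)
  have o: "\<forall>Tk\<in>{T1,T2,T3,T4}. psl_order Tk \<in> {2,4}"
    using order4s(1,2) order2[of 0 r2 r2 0] order2[of 0 r2 "-r2" 0]
    by (simp add: T1_def T2_def T3_def T4_def r2_sq)
  show ?thesis using final_from[OF U V T1 T2 T3 T4 sig b] c o b by simp
qed

lemma case_IK:
  assumes p: "par \<phi> SA SA \<and> \<not> par \<phi> SA SB \<and> par \<phi> SB SA \<and> par \<phi> SB SB"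
    and sig: "pchar \<sigma> = pchar sig0"
  shows "FINAL \<phi> \<sigma>"
proof -
  have U: "psl_eq (mat_eval sig0 (\<phi> SA)) Is" using U_of[of \<phi> SA] p by (simp add: qs_def)
  have V: "psl_eq (mat_eval sig0 (\<phi> SB)) Ks" using U_of[of \<phi> SB] p by (simp add: qs_def)
  define T1 where "T1 = qm r2 (-r2) 0 0"
  define T2 where "T2 = qm r2 r2 0 0"
  define T3 where "T3 = qm 0 0 r2 r2"
  define T4 where "T4 = qm 0 0 r2 (-r2)"
  have T1: "det T1 = 1" "cj T1 Is = Is" "cj T1 Js = Ks" by (simp_all add: T1_def qm_inv_r qsimps)
  have T2: "det T2 = 1" "cj T2 Is = Is" "cj T2 Js = - Ks" by (simp_all add: T2_def qm_inv_r qsimps)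
  have T3: "det T3 = 1" "cj T3 Is = - Is" "cj T3 Js = Ks" by (simp_all add: T3_def qm_inv_r qsimps)
  have T4: "det T4 = 1" "cj T4 Is = - Is" "cj T4 Js = - Ks" by (simp_all add: T4_def qm_inv_r qsimps)
  have b: "b1 \<phi> = 2" using b1_val(3) p by blast
  have e1: "FT T2 = FT T1" using FT_qmJ[of r2 "-r2" 0 0] by (simp add: T1_def T2_def r2_sq)
  have e2: "FT T4 = FT T3" using FT_qmJ[of 0 0 r2 r2] by (simp add: T3_def T4_def r2_sq)
  have n: "FT T1 \<noteq> FT T3"
  proof
    assume "FT T1 = FT T3"
    then have "FT T1 [(False, MT)] = FT T3 [(False, MT)]" by simp
    then show False by (simp add: FT_w1 T1_def T3_def qm_trace power2_eq_square r2_sq)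
  qed
  have c: "card {FT T1, FT T2, FT T3, FT T4} = 2 ^ (2 - 1)"
    using n by (simp add: e1 e2 insert_commute)
  have o: "\<forall>Tk\<in>{T1,T2,T3,T4}. psl_order Tk \<in> {2,4}"
    using order4s(3,4) order2[of 0 0 r2 r2] order2[of 0 0 r2 "-r2"]
    by (simp add: T1_def T2_def T3_def T4_def r2_sq)
  show ?thesis using final_from[OF U V T1 T2 T3 T4 sig b] c o b by simp
qed

lemma case_KJ:
  assumes p: "par \<phi> SA SA \<and> par \<phi> SA SB \<and> \<not> par \<phi> SB SA \<and> par \<phi> SB SB"
    and sig: "pchar \<sigma> = pchar sig0"
  shows "FINAL \<phi> \<sigma>"
proof -
  have U: "psl_eq (mat_eval sig0 (\<phi> SA)) Ks" using U_of[of \<phi> SA] p by (simp add: qs_def)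
  have V: "psl_eq (mat_eval sig0 (\<phi> SB)) Js" using U_of[of \<phi> SB] p by (simp add: qs_def)
  define T1 where "T1 = qm r2 0 r2 0"
  define T2 where "T2 = qm 0 r2 0 r2"
  define T3 where "T3 = qm r2 0 (-r2) 0"
  define T4 where "T4 = qm 0 r2 0 (-r2)"
  have T1: "det T1 = 1" "cj T1 Is = Ks" "cj T1 Js = Js" by (simp_all add: T1_def qm_inv_r qsimps)
  have T2: "det T2 = 1" "cj T2 Is = Ks" "cj T2 Js = - Js" by (simp_all add: T2_def qm_inv_r qsimps)
  have T3: "det T3 = 1" "cj T3 Is = - Ks" "cj T3 Js = Js" by (simp_all add: T3_def qm_inv_r qsimps)
  have T4: "det T4 = 1" "cj T4 Is = - Ks" "cj T4 Js = - Js" by (simp_all add: T4_def qm_inv_r qsimps)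
  have b: "b1 \<phi> = 2" using b1_val(4) p by blast
  have e1: "FT T3 = FT T1" using FT_qmI[of r2 0 r2 0] by (simp add: T1_def T3_def r2_sq)
  have e2: "FT T4 = FT T2" using FT_qmI[of 0 r2 0 r2] by (simp add: T2_def T4_def r2_sq)
  have n: "FT T1 \<noteq> FT T2"
  proof
    assume "FT T1 = FT T2"
    then have "FT T1 [(False, MT)] = FT T2 [(False, MT)]" by simp
    then show False by (simp add: FT_w1 T1_def T2_def qm_trace power2_eq_square r2_sq)
  qed
  have c: "card {FT T1, FT T2, FT T3, FT T4} = 2 ^ (2 - 1)"
    using n by (simp add: e1 e2 insert_commute)
  have o: "\<forall>Tk\<in>{T1,T2,T3,T4}. psl_order Tk \<in> {2,4}"
    using order4s(5,6) order2[of 0 r2 0 r2] order2[of 0 r2 0 "-r2"]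
    by (simp add: T1_def T2_def T3_def T4_def r2_sq)
  show ?thesis using final_from[OF U V T1 T2 T3 T4 sig b] c o b by simp
qed

lemma case_IJ:
  assumes p: "par \<phi> SA SA \<and> \<not> par \<phi> SA SB \<and> \<not> par \<phi> SB SA \<and> par \<phi> SB SB"
    and sig: "pchar \<sigma> = pchar sig0"
  shows "FINAL \<phi> \<sigma>"
proof -
  have U: "psl_eq (mat_eval sig0 (\<phi> SA)) Is" using U_of[of \<phi> SA] p by (simp add: qs_def)
  have V: "psl_eq (mat_eval sig0 (\<phi> SB)) Js" using U_of[of \<phi> SB] p by (simp add: qs_def)
  define T1 where "T1 = qm 1 0 0 0"
  define T2 where "T2 = qm 0 1 0 0"
  define T3 where "T3 = qm 0 0 1 0"
  define T4 where "T4 = qm 0 0 0 1"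
  have T1: "det T1 = 1" "cj T1 Is = Is" "cj T1 Js = Js" by (simp_all add: T1_def qm_inv_r qsimps)
  have T2: "det T2 = 1" "cj T2 Is = Is" "cj T2 Js = - Js" by (simp_all add: T2_def qm_inv_r qsimps)
  have T3: "det T3 = 1" "cj T3 Is = - Is" "cj T3 Js = Js" by (simp_all add: T3_def qm_inv_r qsimps)
  have T4: "det T4 = 1" "cj T4 Is = - Is" "cj T4 Js = - Js" by (simp_all add: T4_def qm_inv_r qsimps)
  have b: "b1 \<phi> = 3" using b1_val(1) p by blast
  have w1: "FT T1 [(False, MT)] = 4" "FT T2 [(False, MT)] = 0" "FT T3 [(False, MT)] = 0" "FT T4 [(False, MT)] = 0"
    by (simp_all add: FT_w1 T1_def T2_def T3_def T4_def qm_trace)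
  have w2: "FT T2 [(False, MT), (False, MA)] = 4" "FT T3 [(False, MT), (False, MA)] = 0" "FT T4 [(False, MT), (False, MA)] = 0"
    by (simp_all add: FT_w2 T2_def T3_def T4_def qm_trace qsimps)
  have w3: "FT T3 [(False, MT), (False, MB)] = 4" "FT T4 [(False, MT), (False, MB)] = 0"
    by (simp_all add: FT_w3 T3_def T4_def qm_trace qsimps)
  have d: "FT T1 \<noteq> FT T2" "FT T1 \<noteq> FT T3" "FT T1 \<noteq> FT T4" "FT T2 \<noteq> FT T3" "FT T2 \<noteq> FT T4" "FT T3 \<noteq> FT T4"
    using w1 w2 w3 by (metis zero_neq_numeral)+
  have c: "card {FT T1, FT T2, FT T3, FT T4} = 2 ^ (3 - 1)"
    using d by simp
  have o: "\<forall>Tk\<in>{T1,T2,T3,T4}. psl_order Tk \<in> {1,2}"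
    using order1 order2[of 0 1 0 0] order2[of 0 0 1 0] order2[of 0 0 0 1]
    by (simp add: T1_def T2_def T3_def T4_def)
  show ?thesis using final_from[OF U V T1 T2 T3 T4 sig b] c o b by simp
qed

lemma case_JK:
  assumes p: "\<not> par \<phi> SA SA \<and> par \<phi> SA SB \<and> par \<phi> SB SA \<and> par \<phi> SB SB"
    and sig: "pchar \<sigma> = pchar sig0"
  shows "FINAL \<phi> \<sigma>"
proof -
  have U: "psl_eq (mat_eval sig0 (\<phi> SA)) Js" using U_of[of \<phi> SA] p by (simp add: qs_def)
  have V: "psl_eq (mat_eval sig0 (\<phi> SB)) Ks" using U_of[of \<phi> SB] p by (simp add: qs_def)
  define h :: complex where "h = 1/2"
  have hh: "h * h = 1/4" by (simp add: h_def)
  define T1 where "T1 = qm h (-h) (-h) (-h)"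
  define T2 where "T2 = qm h h h (-h)"
  define T3 where "T3 = qm h (-h) h h"
  define T4 where "T4 = qm h h (-h) h"
  have T1: "det T1 = 1" "cj T1 Is = Js" "cj T1 Js = Ks" by (simp_all add: T1_def qm_inv_r qsimps hh)
  have T2: "det T2 = 1" "cj T2 Is = Js" "cj T2 Js = - Ks" by (simp_all add: T2_def qm_inv_r qsimps hh)
  have T3: "det T3 = 1" "cj T3 Is = - Js" "cj T3 Js = Ks" by (simp_all add: T3_def qm_inv_r qsimps hh)
  have T4: "det T4 = 1" "cj T4 Is = - Js" "cj T4 Js = - Ks" by (simp_all add: T4_def qm_inv_r qsimps hh)
  have b: "b1 \<phi> = 1" using b1_val(5) p by blast
  have e1: "FT T3 = FT T1" using FT_qmI[of h "-h" "-h" "-h"] by (simp add: T1_def T3_def hh)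
  have e2: "FT T4 = FT T1" using FT_qmJ[of h "-h" "-h" "-h"] by (simp add: T1_def T4_def hh)
  have e3: "FT T2 = FT T3" using FT_qmJ[of h "-h" h h] by (simp add: T2_def T3_def hh)
  have c: "card {FT T1, FT T2, FT T3, FT T4} = 2 ^ (1 - 1)"
    by (simp add: e1 e2 e3)
  show ?thesis using final_from[OF U V T1 T2 T3 T4 sig b] c b by simp
qed

lemma case_KI:
  assumes p: "par \<phi> SA SA \<and> par \<phi> SA SB \<and> par \<phi> SB SA \<and> \<not> par \<phi> SB SB"
    and sig: "pchar \<sigma> = pchar sig0"
  shows "FINAL \<phi> \<sigma>"
proof -
  have U: "psl_eq (mat_eval sig0 (\<phi> SA)) Ks" using U_of[of \<phi> SA] p by (simp add: qs_def)
  have V: "psl_eq (mat_eval sig0 (\<phi> SB)) Is" using U_of[of \<phi> SB] p by (simp add: qs_def)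
  define h :: complex where "h = 1/2"
  have hh: "h * h = 1/4" by (simp add: h_def)
  define T1 where "T1 = qm h h h h"
  define T2 where "T2 = qm h (-h) h (-h)"
  define T3 where "T3 = qm h (-h) (-h) h"
  define T4 where "T4 = qm h h (-h) (-h)"
  have T1: "det T1 = 1" "cj T1 Is = Ks" "cj T1 Js = Is" by (simp_all add: T1_def qm_inv_r qsimps hh)
  have T2: "det T2 = 1" "cj T2 Is = Ks" "cj T2 Js = - Is" by (simp_all add: T2_def qm_inv_r qsimps hh)
  have T3: "det T3 = 1" "cj T3 Is = - Ks" "cj T3 Js = Is" by (simp_all add: T3_def qm_inv_r qsimps hh)
  have T4: "det T4 = 1" "cj T4 Is = - Ks" "cj T4 Js = - Is" by (simp_all add: T4_def qm_inv_r qsimps hh)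
  have b: "b1 \<phi> = 1" using b1_val(6) p by blast
  have e1: "FT T4 = FT T1" using FT_qmI[of h h h h] by (simp add: T1_def T4_def hh)
  have e2: "FT T2 = FT T1" using FT_qmJ[of h h h h] by (simp add: T1_def T2_def hh)
  have e3: "FT T3 = FT T2" using FT_qmI[of h "-h" h "-h"] by (simp add: T2_def T3_def hh)
  have c: "card {FT T1, FT T2, FT T3, FT T4} = 2 ^ (1 - 1)"
    by (simp add: e1 e2 e3)
  show ?thesis using final_from[OF U V T1 T2 T3 T4 sig b] c b by simp
qed

lemma parity_det: assumes "ab_det \<phi> = 1"
  shows "(par \<phi> SA SA \<and> par \<phi> SB SB) \<noteq> (par \<phi> SB SA \<and> par \<phi> SA SB)"
proof -
  have "odd (ab_det \<phi>)" using assms by simp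
  then show ?thesis unfolding ab_det_def par_def by auto
qed

theorem lemma4p3:
  fixes \<phi> :: "sgen \<Rightarrow> sgen word" and \<sigma> :: "sgen \<Rightarrow> complex^2^2"
  assumes "hyperbolic_optb \<phi>"
    and "psl_rep_S \<sigma>"
    and "irreducible_rep \<sigma>"
    and "card (psl_centraliser (rep_image \<sigma>)) = 4"
  shows "card (rbar_fibre \<phi> (pchar \<sigma>)) = 2 ^ (b1 \<phi> - 1)
    \<and> card {chi \<in> rbar_fibre \<phi> (pchar \<sigma>). lifts_to_X \<phi> chi} = 1
    \<and> (\<forall>\<rho>. psl_rep_M \<phi> \<rho> \<and> pchar \<rho> \<in> rbar_fibre \<phi> (pchar \<sigma>) \<longrightarrow>
          psl_eq (mat_eval \<rho> longitude) (mat 1)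
        \<and> (b1 \<phi> = 2 \<longrightarrow> psl_order (\<rho> MT) \<in> {2, 4})
        \<and> (b1 \<phi> = 3 \<longrightarrow> psl_order (\<rho> MT) \<in> {1, 2}))"
proof -
  have tr: "trace (\<sigma> SA) = 0" "trace (\<sigma> SB) = 0" "trace (\<sigma> SA ** \<sigma> SB) = 0"
    using centr_traces[OF assms(2,3,4)] by auto
  have d: "\<forall>g. det (\<sigma> g) = 1" using assms(2) by (simp add: psl_rep_S_def)
  obtain Q Qi where QQ: "Q ** Qi = mat 1" "Qi ** Q = mat 1" "Qi ** \<sigma> SA ** Q = Is" "Qi ** \<sigma> SB ** Q = Js"
    using NF[OF _ _ tr] d by blast
  have "(\<lambda>g. Qi ** \<sigma> g ** Q) = sig0"
    by (rule ext) (simp add: sig0_def QQ split: sgen.split)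
  then have sig: "pchar \<sigma> = pchar sig0" using pchar_conj[OF QQ(1,2) d] by simp
  have pd: "(par \<phi> SA SA \<and> par \<phi> SB SB) \<noteq> (par \<phi> SB SA \<and> par \<phi> SA SB)"
    using assms(1) parity_det by (simp add: hyperbolic_optb_def)
  show ?thesis
  proof (cases "par \<phi> SA SA"; cases "par \<phi> SA SB"; cases "par \<phi> SB SA"; cases "par \<phi> SB SB")
  qed (use pd case_IJ[OF _ sig] case_JI[OF _ sig] case_IK[OF _ sig] case_KJ[OF _ sig] case_JK[OF _ sig] case_KI[OF _ sig] in auto)
qed


end
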